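(* Let $\hat{H}=\sum_j h_j\hat{\gamma}_j$ be a Hamiltonian on a finite-dimensional Hilbert space with finitely many terms, each $\hat{\gamma}_j$ Hermitian with $\|\hat{\gamma}_j\|=1$ and $h_j\in\mathbb{R}$, with commutativity graph $G$ and graph distance $d_{ij}$ on $G$. Let $H_{ij}=2\sqrt{|h_i||h_j|}$ if $\langle ij\rangle$ is an edge of $G$ and $H_{ij}=0$ otherwise, and $G_{ij}(t)=[e^{Ht}]_{ij}$. Assume there are constants $u>0$, $c>0$ such that $G_{ij}(t)\le c\,(ut/d_{ij})^{d_{ij}}$ for all vertices $i,j$ with $1\le d_{ij}<\infty$ and all $0\le t\le d_{ij}/u$. Let $\hat{A},\hat{B}$ be operators with $X=S(\hat{A})$, $Y=S(\hat{B})$, $X\cap Y=\emptyset$, and $d_{XY}=\min_{i\in X,j\in Y}d_{ij}<\infty$. Then for all $0\le t\le d_{XY}/u$, $$\|[\hat{A}(t),\hat{B}]\|-\|[\hat{A},\hat{B}]\|\le \frac{4ce}{u}\,\|\hat{A}\|\,\|\hat{B}\|\,h_{XY}\left(\frac{ut}{d_{XY}+1}\right)^{d_{XY}+1},$$ where $h_{XY}=\sum_{i\in X,j\in Y,\,d_{ij}<\infty}\sqrt{|h_ih_j|}\,e^{d_{XY}-d_{ij}}$.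
   Context: $\|\cdot\|$ is the operator norm and $\hat{A}(t)=e^{i\hat{H}t}\hat{A}e^{-i\hat{H}t}$. The commutativity graph $G$ has one vertex per term $\hat{\gamma}_j$, with an edge between $i\neq j$ iff $[\hat{\gamma}_i,\hat{\gamma}_j]\ne0$. The support of an operator $\hat{A}$ on the commutativity graph is $S(\hat{A})=\{i:[\hat{\gamma}_i,\hat{A}]\ne0\}$. *)

theory Defs
  imports "HOL-Analysis.Analysis" "HOL-Library.Extended_Nat"
begin

text \<open>Matrices over a field; the finite-dimensional Hilbert space is complex^'n
  with its Euclidean (L2) norm.\<close>

fun mat_pow :: "'a::semiring_1^'n^'n \<Rightarrow> nat \<Rightarrow> 'a^'n^'n" where
  "mat_pow M 0 = mat 1"
| "mat_pow M (Suc k) = M ** mat_pow M k"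

definition mexp :: "'a::{real_normed_field,banach}^'n::finite^'n \<Rightarrow> 'a^'n^'n" where
  "mexp M = (\<Sum>k. (\<chi> i j. (mat_pow M k $ i $ j) /\<^sub>R fact k))"

definition mscale :: "'a::times \<Rightarrow> 'a^'n^'m \<Rightarrow> 'a^'n^'m" where
  "mscale c M = (\<chi> i j. c * M $ i $ j)"

definition adjoint :: "complex^'n^'n \<Rightarrow> complex^'n^'n" where
  "adjoint M = (\<chi> i j. cnj (M $ j $ i))"

definition hermitian :: "complex^'n^'n \<Rightarrow> bool" where
  "hermitian M \<longleftrightarrow> adjoint M = M"

definition opnorm :: "complex^'n::finite^'n \<Rightarrow> real" where
  "opnorm M = onorm (\<lambda>x. M *v x)"

definition commutator :: "'a::ring_1^'n^'n \<Rightarrow> 'a^'n^'n \<Rightarrow> 'a^'n^'n" where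
  "commutator A B = A ** B - B ** A"

definition heis :: "complex^'n::finite^'n \<Rightarrow> real \<Rightarrow> complex^'n^'n \<Rightarrow> complex^'n^'n" where
  "heis H t A = mexp (mscale (\<i> * of_real t) H) ** A ** mexp (mscale (- \<i> * of_real t) H)"

definition cedge :: "('j \<Rightarrow> complex^'n^'n) \<Rightarrow> 'j \<Rightarrow> 'j \<Rightarrow> bool" where
  "cedge \<gamma> i j \<longleftrightarrow> i \<noteq> j \<and> commutator (\<gamma> i) (\<gamma> j) \<noteq> 0"

inductive walk :: "('j \<Rightarrow> 'j \<Rightarrow> bool) \<Rightarrow> nat \<Rightarrow> 'j \<Rightarrow> 'j \<Rightarrow> bool" for E where
  walk0: "walk E 0 i i"
| walkS: "E i k \<Longrightarrow> walk E n k j \<Longrightarrow> walk E (Suc n) i j"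

definition gdist :: "('j \<Rightarrow> 'j \<Rightarrow> bool) \<Rightarrow> 'j \<Rightarrow> 'j \<Rightarrow> enat" where
  "gdist E i j = (if \<exists>n. walk E n i j then enat (LEAST n. walk E n i j) else \<infinity>)"

definition supp :: "('j \<Rightarrow> complex^'n^'n) \<Rightarrow> complex^'n^'n \<Rightarrow> 'j set" where
  "supp \<gamma> A = {i. commutator (\<gamma> i) A \<noteq> 0}"

definition Hmat :: "('j::finite \<Rightarrow> complex^'n^'n) \<Rightarrow> ('j \<Rightarrow> real) \<Rightarrow> real^'j^'j" where
  "Hmat \<gamma> h = (\<chi> i j. if cedge \<gamma> i j then 2 * sqrt (\<bar>h i\<bar> * \<bar>h j\<bar>) else 0)"

end

theory Submission
  imports Defs
begin

lemma mv_scaleR: "(M::complex^'n::finite^'m::finite) *v (r *\<^sub>R x) = r *\<^sub>R (M *v x)"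
  by (simp add: vec_eq_iff matrix_vector_mult_def scaleR_sum_right)

lemma bl_mv: "bounded_linear (\<lambda>x::complex^'n::finite. (M::complex^'n^'m::finite) *v x)"
proof -
  have "linear (\<lambda>x::complex^'n::finite. (M::complex^'n^'m::finite) *v x)"
    by (rule linearI) (simp_all add: matrix_vector_right_distrib mv_scaleR)
  thus ?thesis by (simp add: linear_conv_bounded_linear)
qed

lemma mv_axis: "((M::'a::semiring_1^'n::finite^'m::finite) *v axis j 1) $ i = M $ i $ j"
  by (simp add: matrix_vector_mult_def axis_def if_distrib cong: if_cong)

lemma opnorm_eq_0: "opnorm (M::complex^'n::finite^'n) = 0 \<longleftrightarrow> M = 0"
proof
  assume "opnorm M = 0"
  hence "\<forall>x. M *v x = 0" using onorm_eq_0[OF bl_mv[of M]] by (simp add: opnorm_def)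
  hence "\<forall>i j. M $ i $ j = 0" by (metis mv_axis zero_index)
  thus "M = 0" by (simp add: vec_eq_iff)
qed (simp add: opnorm_def onorm_zero)

lemma opnorm_ge0: "opnorm M \<ge> 0" by (simp add: opnorm_def onorm_pos_le bl_mv)

lemma opnorm_mv: "norm (M *v x) \<le> opnorm M * norm x"
  unfolding opnorm_def by (rule onorm[OF bl_mv])

lemma opnorm_le: "0 \<le> b \<Longrightarrow> (\<And>x. norm (M *v x) \<le> b * norm x) \<Longrightarrow> opnorm M \<le> b"
  unfolding opnorm_def by (rule onorm_bound)

lemma entry_le_opnorm: "norm ((M::complex^'n::finite^'n) $ i $ j) \<le> opnorm M"
proof -
  have "norm (M $ i $ j) = norm ((M *v axis j 1) $ i)" by (simp add: mv_axis)
  also have "\<dots> \<le> norm (M *v axis j 1)" by (rule Finite_Cartesian_Product.norm_nth_le)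
  also have "\<dots> \<le> opnorm M * norm (axis j (1::complex))" by (rule opnorm_mv)
  also have "\<dots> = opnorm M" by (simp add: norm_axis_1)
  finally show ?thesis .
qed

lemma norm_vec_le_sum: "norm (x::'a::real_normed_vector^'n::finite) \<le> (\<Sum>i\<in>UNIV. norm (x $ i))"
  unfolding norm_vec_def by (rule L2_set_le_sum) simp

lemma opnorm_le_entries: "opnorm (M::complex^'n::finite^'n) \<le> (\<Sum>i\<in>UNIV. \<Sum>j\<in>UNIV. norm (M $ i $ j))"
proof (rule opnorm_le)
  show "0 \<le> (\<Sum>i\<in>UNIV. \<Sum>j\<in>UNIV. norm (M $ i $ j))" by (simp add: sum_nonneg)
  fix x :: "complex^'n"
  have "norm (M *v x) \<le> (\<Sum>i\<in>UNIV. norm ((M *v x) $ i))" by (rule norm_vec_le_sum)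
  also have "\<dots> \<le> (\<Sum>i\<in>UNIV. \<Sum>j\<in>UNIV. norm (M $ i $ j) * norm x)"
  proof (rule sum_mono)
    fix i
    have "norm ((M *v x) $ i) = norm (\<Sum>j\<in>UNIV. M $ i $ j * x $ j)" by (simp add: matrix_vector_mult_def)
    also have "\<dots> \<le> (\<Sum>j\<in>UNIV. norm (M $ i $ j * x $ j))" by (rule norm_sum)
    also have "\<dots> \<le> (\<Sum>j\<in>UNIV. norm (M $ i $ j) * norm x)"
      by (rule sum_mono) (simp add: norm_mult mult_left_mono Finite_Cartesian_Product.norm_nth_le)
    finally show "norm ((M *v x) $ i) \<le> (\<Sum>j\<in>UNIV. norm (M $ i $ j) * norm x)" .
  qed
  finally show "norm (M *v x) \<le> (\<Sum>i\<in>UNIV. \<Sum>j\<in>UNIV. norm (M $ i $ j)) * norm x"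
    by (simp add: sum_distrib_right)
qed

lemma mm_ldistrib: "(A::'a::semiring_1^'n::finite^'n) ** (B + C) = A ** B + A ** C"
  by (simp add: vec_eq_iff matrix_matrix_mult_def distrib_left sum.distrib)
lemma mm_rdistrib: "((A::'a::semiring_1^'n::finite^'n) + B) ** C = A ** C + B ** C"
  by (simp add: vec_eq_iff matrix_matrix_mult_def distrib_right sum.distrib)
lemma mm_scaleR_left: "((r *\<^sub>R A)::complex^'n::finite^'n) ** B = r *\<^sub>R (A ** B)"
  by (simp add: vec_eq_iff matrix_matrix_mult_def scaleR_sum_right)
lemma mm_scaleR_right: "(A::complex^'n::finite^'n) ** (r *\<^sub>R B) = r *\<^sub>R (A ** B)"
  by (simp add: vec_eq_iff matrix_matrix_mult_def scaleR_sum_right)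

typedef ('n::finite) cm = "UNIV :: (complex^'n^'n) set" morphisms mt CM by auto
setup_lifting type_definition_cm

instantiation cm :: (finite) real_normed_vector
begin
lift_definition norm_cm :: "'a cm \<Rightarrow> real" is opnorm .
lift_definition zero_cm :: "'a cm" is 0 .
lift_definition plus_cm :: "'a cm \<Rightarrow> 'a cm \<Rightarrow> 'a cm" is "(+)" .
lift_definition minus_cm :: "'a cm \<Rightarrow> 'a cm \<Rightarrow> 'a cm" is "(-)" .
lift_definition uminus_cm :: "'a cm \<Rightarrow> 'a cm" is uminus .
lift_definition scaleR_cm :: "real \<Rightarrow> 'a cm \<Rightarrow> 'a cm" is "scaleR" .
definition dist_cm :: "'a cm \<Rightarrow> 'a cm \<Rightarrow> real" where "dist_cm a b = norm (a - b)"
definition uniformity_cm :: "('a cm \<times> 'a cm) filter" where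
  "uniformity_cm = (INF e\<in>{0 <..}. principal {(x, y). dist x y < e})"
definition open_cm :: "'a cm set \<Rightarrow> bool" where
  "open_cm S = (\<forall>x\<in>S. \<forall>\<^sub>F (x', y) in uniformity. x' = x \<longrightarrow> y \<in> S)"
definition sgn_cm :: "'a cm \<Rightarrow> 'a cm" where "sgn_cm x = scaleR (inverse (norm x)) x"
instance
proof
  fix x y :: "'a cm" and a b :: real
  show "dist x y = norm (x - y)" by (simp add: dist_cm_def)
  show "sgn x = inverse (norm x) *\<^sub>R x" by (simp add: sgn_cm_def)
  show "(uniformity :: ('a cm \<times> 'a cm) filter) = (INF e\<in>{0 <..}. principal {(x, y). dist x y < e})"
    by (simp add: uniformity_cm_def)
  show "norm x = 0 \<longleftrightarrow> x = 0" by transfer (rule opnorm_eq_0)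
  show "norm (x + y) \<le> norm x + norm y"
    by transfer (simp add: opnorm_def matrix_vector_mult_add_rdistrib onorm_triangle bl_mv)
  show "norm (a *\<^sub>R x) = \<bar>a\<bar> * norm x"
  proof transfer
    fix a and x :: "complex^'a^'a"
    have "(\<lambda>v. (a *\<^sub>R x) *v v) = (\<lambda>v. a *\<^sub>R (x *v v))"
      by (simp add: fun_eq_iff vec_eq_iff matrix_vector_mult_def scaleR_sum_right)
    thus "opnorm (a *\<^sub>R x) = \<bar>a\<bar> * opnorm x" by (simp add: opnorm_def onorm_scaleR bl_mv)
  qed
  show "a *\<^sub>R (x + y) = a *\<^sub>R x + a *\<^sub>R y" by transfer (simp add: scaleR_right_distrib)
  show "(a + b) *\<^sub>R x = a *\<^sub>R x + b *\<^sub>R x" by transfer (simp add: scaleR_left_distrib)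
  show "a *\<^sub>R b *\<^sub>R x = (a * b) *\<^sub>R x" by transfer simp
  show "1 *\<^sub>R x = x" by transfer simp
  fix z :: "'a cm"
  show "x + y + z = x + (y + z)" by transfer (simp add: add.assoc)
  show "x + y = y + x" by transfer (simp add: add.commute)
  show "0 + x = x" by transfer simp
  show "- x + x = 0" by transfer simp
  show "x - y = x + - y" by transfer simp
next
  fix U :: "'a cm set"
  show "open U = (\<forall>x\<in>U. \<forall>\<^sub>F (x', y) in uniformity. x' = x \<longrightarrow> y \<in> U)" by (simp add: open_cm_def)
qed
end

instantiation cm :: (finite) ring_1
begin
lift_definition one_cm :: "'a cm" is "mat 1" .
lift_definition times_cm :: "'a cm \<Rightarrow> 'a cm \<Rightarrow> 'a cm" is "(**)" .
instance
proof
  fix x y z :: "'a cm"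
  show "x * y * z = x * (y * z)" by transfer (simp add: matrix_mul_assoc)
  show "1 * x = x" by transfer (simp add: matrix_mul_lid)
  show "x * 1 = x" by transfer (simp add: matrix_mul_rid)
  show "(x + y) * z = x * z + y * z" by transfer (rule mm_rdistrib)
  show "x * (y + z) = x * y + x * z" by transfer (rule mm_ldistrib)
  show "(0::'a cm) \<noteq> 1" by transfer (simp add: vec_eq_iff mat_def)
qed
end

instance cm :: (finite) real_normed_algebra_1
proof
  fix x y :: "'a cm" and a :: real
  show "a *\<^sub>R x * y = a *\<^sub>R (x * y)" by transfer (rule mm_scaleR_left)
  show "x * a *\<^sub>R y = a *\<^sub>R (x * y)" by transfer (rule mm_scaleR_right)
  show "norm (x * y) \<le> norm x * norm y"
  proof transfer
    fix x y :: "complex^'a^'a"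
    have "(\<lambda>v. (x ** y) *v v) = (\<lambda>v. x *v v) \<circ> (\<lambda>v. y *v v)"
      by (simp add: fun_eq_iff matrix_vector_mul_assoc)
    hence "opnorm (x ** y) = onorm ((\<lambda>v. x *v v) \<circ> (\<lambda>v. y *v v))" by (simp only: opnorm_def)
    also have "\<dots> \<le> opnorm x * opnorm y" unfolding opnorm_def by (rule onorm_compose[OF bl_mv bl_mv])
    finally show "opnorm (x ** y) \<le> opnorm x * opnorm y" .
  qed
  show "norm (1::'a cm) = 1" by transfer (simp add: opnorm_def onorm_id)
qed

lemma bl_mt: "bounded_linear (mt :: 'n::finite cm \<Rightarrow> _)"
proof
  fix x y :: "'n cm" and r
  show "mt (x + y) = mt x + mt y" by transfer simp
  show "mt (r *\<^sub>R x) = r *\<^sub>R mt x" by transfer simp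
  show "\<exists>K. \<forall>x::'n cm. norm (mt x) \<le> norm x * K"
  proof (intro exI allI)
    fix x :: "'n cm"
    have "norm (mt x) \<le> (\<Sum>i\<in>UNIV. norm (mt x $ i))" by (rule norm_vec_le_sum)
    also have "\<dots> \<le> (\<Sum>i\<in>UNIV. \<Sum>j\<in>UNIV. norm (mt x $ i $ j))" by (intro sum_mono norm_vec_le_sum)
    also have "\<dots> \<le> (\<Sum>i\<in>(UNIV::'n set). \<Sum>j\<in>(UNIV::'n set). norm x)"
      by (intro sum_mono) (simp add: norm_cm.rep_eq entry_le_opnorm)
    finally show "norm (mt x) \<le> norm x * (real CARD('n) * real CARD('n))" by (simp add: mult_ac)
  qed
qed

lemma bl_CM: "bounded_linear (CM :: complex^'n::finite^'n \<Rightarrow> 'n cm)"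
proof
  fix x y :: "complex^'n^'n" and r
  show "CM (x + y) = CM x + CM y" by transfer simp
  show "CM (r *\<^sub>R x) = r *\<^sub>R CM x" by transfer simp
  show "\<exists>K. \<forall>x::complex^'n^'n. norm (CM x) \<le> norm x * K"
  proof (intro exI allI)
    fix z :: "complex^'n^'n"
    have "norm (CM z) \<le> (\<Sum>i\<in>UNIV. \<Sum>j\<in>UNIV. norm (z $ i $ j))"
      by (simp add: norm_cm.abs_eq opnorm_le_entries)
    also have "\<dots> \<le> (\<Sum>i\<in>(UNIV::'n set). \<Sum>j\<in>(UNIV::'n set). norm z)"
      by (intro sum_mono) (meson Finite_Cartesian_Product.norm_nth_le order_trans)
    finally show "norm (CM z) \<le> norm z * (real CARD('n) * real CARD('n))" by (simp add: mult_ac)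
  qed
qed

instance cm :: (finite) banach
proof
  fix X :: "nat \<Rightarrow> 'a cm"
  assume "Cauchy X"
  hence "Cauchy (\<lambda>n. mt (X n))" by (rule bounded_linear.Cauchy[OF bl_mt])
  then obtain L where "(\<lambda>n. mt (X n)) \<longlonglongrightarrow> L" using Cauchy_convergent_iff convergent_def by blast
  hence "(\<lambda>n. CM (mt (X n))) \<longlonglongrightarrow> CM L" by (rule bounded_linear.tendsto[OF bl_CM])
  thus "convergent X" by (simp add: mt_inverse convergent_def) blast
qed

lemma sum_if_mult_l: "(\<Sum>k\<in>(UNIV::'n::finite set). (if i = k then c else 0) * f k) = c * (f i :: 'a::semiring_1)"
proof -
  have "(\<Sum>k\<in>UNIV. (if i = k then c else 0) * f k) = (\<Sum>k\<in>UNIV. if i = k then c * f k else 0)"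
    by (rule sum.cong) auto
  thus ?thesis by (simp add: sum.delta sum.delta')
qed
lemma sum_if_mult_r: "(\<Sum>k\<in>(UNIV::'n::finite set). f k * (if k = j then c else 0)) = (f j :: 'a::semiring_1) * c"
proof -
  have "(\<Sum>k\<in>UNIV. f k * (if k = j then c else 0)) = (\<Sum>k\<in>UNIV. if k = j then f k * c else 0)"
    by (rule sum.cong) auto
  thus ?thesis by (simp add: sum.delta sum.delta')
qed
lemma CM_diff: "CM (a - b) = CM a - CM b"
  by (rule mt_inject[THEN iffD1]) (simp add: minus_cm.rep_eq CM_inverse)
lemma sum_if_mult_r': "(\<Sum>k\<in>(UNIV::'n::finite set). f k * (if j = k then c else 0)) = (f j :: 'a::semiring_1) * c"
  using sum_if_mult_r[of f j c] by (simp add: eq_commute)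
lemma mt_scaleR: "mt (r *\<^sub>R x) = r *\<^sub>R mt x" by transfer simp
lemma mt_times: "mt (x * y) = mt x ** mt y" by transfer simp
lemma mt_one: "mt 1 = mat 1" by transfer simp
lemma CM_times: "CM (x ** y) = CM x * CM y" by (simp add: times_cm.abs_eq)

lemma mt_power: "mt (x ^ k) = mat_pow (mt x) k"
  by (induction k) (simp_all add: mt_one mt_times)

lemma mexp_eq: "mexp M = mt (exp (CM M))"
proof -
  have "mt (exp (CM M)) = (\<Sum>n. mt ((CM M) ^ n /\<^sub>R fact n))"
    unfolding exp_def by (rule bounded_linear.suminf[OF bl_mt summable_exp_generic])
  also have "\<dots> = (\<Sum>n. mat_pow M n /\<^sub>R fact n)"
    by (simp add: mt_scaleR mt_power CM_inverse)
  also have "\<dots> = mexp M"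
    unfolding mexp_def by (rule arg_cong[where f=suminf]) (simp add: fun_eq_iff vec_eq_iff)
  finally show ?thesis by simp
qed

lemma CM_mexp: "CM (mexp M) = exp (CM M)" by (simp add: mexp_eq mt_inverse)

lemma opnorm_norm: "opnorm M = norm (CM M)" by (simp add: norm_cm.abs_eq)

lemma commutator_CM: "CM (commutator A B) = CM A * CM B - CM B * CM A"
  by (simp add: commutator_def CM_times CM_diff)

lemma mscale_eq: "mscale c M = mat c ** M"
  by (simp add: mscale_def vec_eq_iff matrix_matrix_mult_def mat_def sum_if_mult_l)

lift_definition adj :: "'n::finite cm \<Rightarrow> 'n cm" is adjoint .

lemma adjoint_mult: "adjoint (A ** B) = adjoint B ** adjoint A"
  by (simp add: adjoint_def vec_eq_iff matrix_matrix_mult_def cnj_sum mult.commute)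

lemma adj_mult: "adj (x * y) = adj y * adj x" by transfer (rule adjoint_mult)
lemma adj_one: "adj 1 = 1" by transfer (simp add: adjoint_def vec_eq_iff mat_def)
lemma adj_add: "adj (x + y) = adj x + adj y" by transfer (simp add: adjoint_def vec_eq_iff)
lemma adj_scaleR: "adj (r *\<^sub>R x) = r *\<^sub>R adj x" by transfer (simp add: adjoint_def vec_eq_iff)
lemma adj_uminus: "adj (- x) = - adj x" by transfer (simp add: adjoint_def vec_eq_iff)

lemma bl_adj: "bounded_linear (adj :: 'n::finite cm \<Rightarrow> 'n cm)"
proof
  fix x y :: "'n cm" and r
  show "adj (x + y) = adj x + adj y" by (rule adj_add)
  show "adj (r *\<^sub>R x) = r *\<^sub>R adj x" by (rule adj_scaleR)
  show "\<exists>K. \<forall>x::'n cm. norm (adj x) \<le> norm x * K"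
  proof (intro exI allI)
    fix z :: "'n cm"
    have "norm (adj z) \<le> (\<Sum>i\<in>UNIV. \<Sum>j\<in>UNIV. norm (mt (adj z) $ i $ j))"
      by (simp add: norm_cm.rep_eq opnorm_le_entries)
    also have "\<dots> \<le> (\<Sum>i\<in>(UNIV::'n set). \<Sum>j\<in>(UNIV::'n set). norm z)"
      by (intro sum_mono) (simp add: adj.rep_eq adjoint_def norm_cm.rep_eq entry_le_opnorm)
    finally show "norm (adj z) \<le> norm z * (real CARD('n) * real CARD('n))" by (simp add: mult_ac)
  qed
qed

lemma adj_power: "adj (x ^ n) = (adj x) ^ n"
  by (induction n) (simp_all add: adj_one adj_mult power_Suc2 power_commutes)

lemma adj_exp: "adj (exp x) = exp (adj x)"
proof -
  have "adj (exp x) = (\<Sum>n. adj (x ^ n /\<^sub>R fact n))"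
    unfolding exp_def by (rule bounded_linear.suminf[OF bl_adj summable_exp_generic])
  thus ?thesis by (simp add: exp_def adj_scaleR adj_power)
qed

definition Icm :: "'n::finite cm" where "Icm = CM (mat \<i>)"

lemma mat_comm: "mat c ** M = M ** mat (c::'a::comm_semiring_1)"
proof -
  have "(mat c ** M) $ i $ j = (M ** mat c) $ i $ j" for i j
  proof -
    have "(mat c ** M) $ i $ j = c * M $ i $ j"
      by (simp add: matrix_matrix_mult_def mat_def sum_if_mult_l)
    moreover have "(M ** mat c) $ i $ j = M $ i $ j * c"
      by (simp add: matrix_matrix_mult_def mat_def sum_if_mult_r)
    ultimately show ?thesis by (simp add: mult.commute)
  qed
  thus ?thesis by (simp add: vec_eq_iff)
qed

lemma Icm_comm: "Icm * x = x * Icm"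
  unfolding Icm_def
  by transfer (rule mat_comm)

lemma adj_Icm: "adj Icm = - Icm"
  unfolding Icm_def by transfer (simp add: adjoint_def vec_eq_iff mat_def)

lemma mat_mv: "mat c *v x = (\<chi> i. c * x $ i)"
  by (simp add: vec_eq_iff matrix_vector_mult_def mat_def sum_if_mult_l)

lemma norm_Icm: "norm (Icm :: 'n::finite cm) \<le> 1"
  unfolding Icm_def norm_cm.abs_eq
proof (rule opnorm_le)
  fix x :: "complex^'n"
  have "norm (mat \<i> *v x) = norm x"
    by (simp add: mat_mv norm_vec_def norm_mult)
  thus "norm (mat \<i> *v x) \<le> 1 * norm x" by simp
qed simp

lemma norm_sq_vec: "(norm (x::complex^'n::finite))^2 = (\<Sum>i\<in>UNIV. (cmod (x $ i))^2)"
  by (simp add: norm_vec_def L2_set_def sum_nonneg)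

lemma isometry:
  assumes "adjoint U ** U = mat 1"
  shows "norm (U *v x) = norm (x::complex^'n::finite)"
proof -
  have key: "(\<Sum>i\<in>UNIV. cnj (U $ i $ k) * U $ i $ j) = (if k = j then 1 else 0)" for k j
  proof -
    have "(adjoint U ** U) $ k $ j = (if k = j then 1 else 0)" using assms by (simp add: mat_def)
    thus ?thesis by (simp add: adjoint_def matrix_matrix_mult_def)
  qed
  have "complex_of_real ((norm (U *v x))^2) = (\<Sum>i\<in>UNIV. (U *v x) $ i * cnj ((U *v x) $ i))"
    by (simp only: norm_sq_vec of_real_sum complex_norm_square)
  also have "\<dots> = (\<Sum>i\<in>UNIV. \<Sum>k\<in>UNIV. \<Sum>j\<in>UNIV. x $ j * cnj (x $ k) * (cnj (U $ i $ k) * U $ i $ j))"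
    by (simp add: matrix_vector_mult_def cnj_sum sum_distrib_left sum_distrib_right mult_ac)
  also have "\<dots> = (\<Sum>k\<in>UNIV. \<Sum>i\<in>UNIV. \<Sum>j\<in>UNIV. x $ j * cnj (x $ k) * (cnj (U $ i $ k) * U $ i $ j))"
    by (rule sum.swap)
  also have "\<dots> = (\<Sum>k\<in>UNIV. \<Sum>j\<in>UNIV. \<Sum>i\<in>UNIV. x $ j * cnj (x $ k) * (cnj (U $ i $ k) * U $ i $ j))"
    by (rule sum.cong[OF refl], rule sum.swap)
  also have "\<dots> = (\<Sum>k\<in>UNIV. \<Sum>j\<in>UNIV. x $ j * cnj (x $ k) * (\<Sum>i\<in>UNIV. cnj (U $ i $ k) * U $ i $ j))"
    by (simp add: sum_distrib_left)
  also have "\<dots> = (\<Sum>k\<in>UNIV. x $ k * cnj (x $ k))"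
    by (simp add: key sum_if_mult_r')
  also have "\<dots> = complex_of_real ((norm x)^2)"
    by (simp only: norm_sq_vec of_real_sum complex_norm_square)
  finally have "(norm (U *v x))^2 = (norm x)^2" using of_real_eq_iff by blast
  thus ?thesis by (simp add: power2_eq_iff_nonneg)
qed

lemma unitary_norm:
  assumes "adj u * u = 1" shows "norm (u :: 'n::finite cm) \<le> 1"
proof -
  have "adjoint (mt u) ** mt u = mat 1" using assms by transfer simp
  hence "\<And>x. norm (mt u *v x) = norm x" by (rule isometry)
  hence "opnorm (mt u) \<le> 1" by (intro opnorm_le) simp_all
  thus ?thesis by (simp add: norm_cm.rep_eq)
qed

lemma exp_iherm_norm:
  assumes "adj y = y"
  shows "norm (exp (s *\<^sub>R (Icm * y))) \<le> 1"
proof (rule unitary_norm)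
  let ?X = "s *\<^sub>R (Icm * y)"
  have "adj ?X = - ?X" using assms by (simp add: adj_scaleR adj_mult adj_Icm Icm_comm)
  hence "adj (exp ?X) * exp ?X = exp (- ?X) * exp ?X" by (simp add: adj_exp)
  also have "\<dots> = 1" using exp_minus_inverse[of "- ?X"] by simp
  finally show "adj (exp ?X) * exp ?X = 1" .
qed

lemma norm_sandwich:
  fixes u y v :: "'a::real_normed_algebra"
  assumes "norm u \<le> 1" "norm v \<le> 1"
  shows "norm (u * y * v) \<le> norm y"
proof -
  have "norm (u * y * v) \<le> norm (u * y) * norm v" by (rule norm_mult_ineq)
  also have "\<dots> \<le> (norm u * norm y) * norm v" by (intro mult_right_mono norm_mult_ineq) simp
  also have "\<dots> \<le> (1 * norm y) * 1" using assms by (intro mult_mono) auto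
  finally show ?thesis by simp
qed

lemma deriv_sandwich:
  fixes K a0 :: "'a::{real_normed_algebra_1,banach}"
  shows "((\<lambda>s. exp (s *\<^sub>R K) * a0 * exp (s *\<^sub>R (-K))) has_vector_derivative
     (K * (exp (s *\<^sub>R K) * a0 * exp (s *\<^sub>R (-K))) - (exp (s *\<^sub>R K) * a0 * exp (s *\<^sub>R (-K))) * K)) (at s within S)"
proof -
  have "((\<lambda>s. exp (s *\<^sub>R K) * a0 * exp (s *\<^sub>R (-K))) has_vector_derivative
       (exp (s *\<^sub>R K) * a0) * (exp (s *\<^sub>R (-K)) * (-K)) + (exp (s *\<^sub>R K) * K * a0) * exp (s *\<^sub>R (-K))) (at s within S)"
    by (intro has_vector_derivative_mult has_vector_derivative_mult_left exp_scaleR_has_vector_derivative_right)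
  moreover have "exp (s *\<^sub>R K) * K * a0 * exp (s *\<^sub>R (-K)) = K * (exp (s *\<^sub>R K) * a0 * exp (s *\<^sub>R (-K)))"
    using exp_times_scaleR_commute[of s K] by (metis mult.assoc)
  moreover have "(exp (s *\<^sub>R K) * a0) * (exp (s *\<^sub>R (-K)) * (-K)) = - ((exp (s *\<^sub>R K) * a0 * exp (s *\<^sub>R (-K))) * K)"
    by (simp add: mult.assoc)
  ultimately show ?thesis by (simp add: algebra_simps)
qed

lemma duhamel:
  fixes Kc Kn a0 x :: "'a::{real_normed_algebra_1,banach}" and F :: "real \<Rightarrow> real"
  assumes comm: "Kc * x = x * Kc"
    and unit1: "\<And>s. norm (exp (s *\<^sub>R Kc)) \<le> 1"
    and t: "0 \<le> t"
    and Fc: "continuous_on {0..t} F"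
    and a_def: "\<And>s. a s = exp (s *\<^sub>R (Kc + Kn)) * a0 * exp (s *\<^sub>R (-(Kc + Kn)))"
    and bound: "\<And>s. s \<in> {0..t} \<Longrightarrow> norm ((Kn * a s - a s * Kn) * x - x * (Kn * a s - a s * Kn)) \<le> F s"
  shows "norm (a t * x - x * a t) \<le> norm (a0 * x - x * a0) + integral {0..t} F"
proof -
  define K where "K = Kc + Kn"
  have aeq: "a = (\<lambda>s. exp (s *\<^sub>R K) * a0 * exp (s *\<^sub>R (-K)))" using a_def K_def by auto
  have da: "(a has_vector_derivative (K * a s - a s * K)) (at s within S)" for s S
    unfolding aeq by (rule deriv_sandwich)
  define c where "c s = a s * x - x * a s" for s
  define c' where "c' s = (K * a s - a s * K) * x - x * (K * a s - a s * K)" for s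
  have dc: "(c has_vector_derivative c' s) (at s within S)" for s S
  proof -
    have "((\<lambda>s. a s * x - x * a s) has_vector_derivative (K * a s - a s * K) * x - x * (K * a s - a s * K)) (at s within S)"
      by (intro has_vector_derivative_diff has_vector_derivative_mult_left has_vector_derivative_mult_right da)
    thus ?thesis unfolding c_def[abs_def] c'_def .
  qed
  define G where "G s = (Kn * a s - a s * Kn) * x - x * (Kn * a s - a s * Kn)" for s
  define W where "W s = exp (s *\<^sub>R (-Kc)) * c s * exp (s *\<^sub>R Kc)" for s
  define W' where "W' s = exp (s *\<^sub>R (-Kc)) * G s * exp (s *\<^sub>R Kc)" for s
  have comm2: "Kc * (x * z) = x * (Kc * z)" for z by (metis comm mult.assoc)
  have Geq: "c' s + c s * Kc - Kc * c s = G s" for s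
    unfolding c'_def c_def G_def K_def by (simp add: algebra_simps comm comm2)
  have dW: "(W has_vector_derivative W' s) (at s within S)" for s S
  proof -
    have "(W has_vector_derivative (exp (s *\<^sub>R (-Kc)) * c s) * (exp (s *\<^sub>R Kc) * Kc) +
       (exp (s *\<^sub>R (-Kc)) * c' s + (exp (s *\<^sub>R (-Kc)) * (-Kc)) * c s) * exp (s *\<^sub>R Kc)) (at s within S)"
      unfolding W_def[abs_def]
      by (intro has_vector_derivative_mult exp_scaleR_has_vector_derivative_right dc)
    moreover have "(exp (s *\<^sub>R (-Kc)) * c s) * (exp (s *\<^sub>R Kc) * Kc) +
       (exp (s *\<^sub>R (-Kc)) * c' s + (exp (s *\<^sub>R (-Kc)) * (-Kc)) * c s) * exp (s *\<^sub>R Kc)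
       = exp (s *\<^sub>R (-Kc)) * (c' s + c s * Kc - Kc * c s) * exp (s *\<^sub>R Kc)"
      using exp_times_scaleR_commute[of s Kc] by (simp add: algebra_simps)
    ultimately show ?thesis unfolding W'_def Geq by simp
  qed
  have ftc: "(W' has_integral W t - W 0) {0..t}"
    by (rule fundamental_theorem_of_calculus[OF t]) (rule dW)
  have W0: "W 0 = a0 * x - x * a0" by (simp add: W_def c_def a_def)
  have "norm (integral {0..t} W') \<le> integral {0..t} F"
  proof (rule integral_norm_bound_integral)
    show "W' integrable_on {0..t}" using ftc by blast
    show "F integrable_on {0..t}" using Fc by (rule integrable_continuous_real)
    fix s assume "s \<in> {0..t}"
    have "norm (W' s) \<le> norm (G s)" unfolding W'_def
      using unit1[of s] unit1[of "-s"] by (intro norm_sandwich) auto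
    also have "\<dots> \<le> F s" using bound[OF \<open>s \<in> {0..t}\<close>] by (simp add: G_def)
    finally show "norm (W' s) \<le> F s" .
  qed
  moreover have "W t = W 0 + integral {0..t} W'" using integral_unique[OF ftc] by simp
  ultimately have Wt: "norm (W t) \<le> norm (a0 * x - x * a0) + integral {0..t} F"
    using norm_triangle_ineq[of "W 0" "integral {0..t} W'"] W0 by simp
  have inv1: "exp (t *\<^sub>R Kc) * exp (t *\<^sub>R (-Kc)) = 1" using exp_minus_inverse[of "t *\<^sub>R Kc"] by simp
  have inv2: "exp (t *\<^sub>R (-Kc)) * exp (t *\<^sub>R Kc) = 1" using exp_minus_inverse[of "- (t *\<^sub>R Kc)"] by simp
  have "c t = exp (t *\<^sub>R Kc) * W t * exp (t *\<^sub>R (-Kc))"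
  proof -
    have e1: "exp (t *\<^sub>R Kc) * exp (- (t *\<^sub>R Kc)) = 1" by (rule exp_minus_inverse)
    have e1': "exp (t *\<^sub>R Kc) * (exp (- (t *\<^sub>R Kc)) * z) = z" for z
      by (simp add: e1 flip: mult.assoc)
    show ?thesis unfolding W_def by (simp add: mult.assoc e1 e1')
  qed
  hence "norm (c t) \<le> norm (W t)"
    using unit1[of t] unit1[of "-t"] by (simp add: norm_sandwich)
  with Wt show ?thesis by (simp add: c_def)
qed

lemma mono_integral:
  assumes "0 \<le> t"
  shows "((\<lambda>s::real. s ^ m / fact m) has_integral t ^ Suc m / fact (Suc m)) {0..t}"
proof -
  have "((\<lambda>s::real. s ^ m / fact m) has_integral (\<lambda>s. s ^ Suc m / fact (Suc m)) t - (\<lambda>s. s ^ Suc m / fact (Suc m)) 0) {0..t}"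
  proof (rule fundamental_theorem_of_calculus[OF assms])
    fix x :: real
    have "((\<lambda>s. s ^ Suc m / fact (Suc m)) has_real_derivative (real (Suc m) * x ^ m) / fact (Suc m)) (at x within {0..t})"
      by (intro derivative_eq_intros) auto
    moreover have "(real (Suc m) * x ^ m) / fact (Suc m) = x ^ m / fact m"
    proof -
      have "fact (Suc m) = real (Suc m) * (fact m :: real)" by (rule fact_Suc)
      moreover have "real (Suc m) \<noteq> 0" by simp
      ultimately show ?thesis by simp
    qed
    ultimately show "((\<lambda>s. s ^ Suc m / fact (Suc m)) has_vector_derivative x ^ m / fact m) (at x within {0..t})"
      by (simp add: has_real_derivative_iff_has_vector_derivative)
  qed
  thus ?thesis by simp
qed

lemma mono_integral_c:
  assumes "0 \<le> t"
  shows "((\<lambda>s::real. c * s ^ m / fact m) has_integral c * t ^ Suc m / fact (Suc m)) {0..t}"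
  using has_integral_mult_right[OF mono_integral[OF assms, of m], of c] by simp

lemma int_bound:
  fixes C :: "'j::finite \<Rightarrow> real \<Rightarrow> real" and w :: "'j \<Rightarrow> real"
  assumes t: "0 \<le> t"
    and w: "\<And>k. 0 \<le> w k"
    and Cc: "\<And>k. continuous_on {0..t} (C k)"
    and Cb: "\<And>k s. s \<in> {0..t} \<Longrightarrow> C k s \<le> (\<Sum>m<N. \<beta> m k * s ^ m / fact m) + \<rho> * s ^ N / fact N"
  shows "integral {0..t} (\<lambda>s. \<Sum>k\<in>UNIV. w k * C k s)
     \<le> (\<Sum>k\<in>UNIV. w k * ((\<Sum>m<N. \<beta> m k * t ^ Suc m / fact (Suc m)) + \<rho> * t ^ Suc N / fact (Suc N)))"
proof (rule has_integral_le)
  have "continuous_on {0..t} (\<lambda>s. \<Sum>k\<in>UNIV. w k * C k s)"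
    by (intro continuous_intros Cc)
  thus "((\<lambda>s. \<Sum>k\<in>UNIV. w k * C k s) has_integral integral {0..t} (\<lambda>s. \<Sum>k\<in>UNIV. w k * C k s)) {0..t}"
    by (intro integrable_integral integrable_continuous_real)
  show "((\<lambda>s. \<Sum>k\<in>UNIV. w k * ((\<Sum>m<N. \<beta> m k * s ^ m / fact m) + \<rho> * s ^ N / fact N)) has_integral
     (\<Sum>k\<in>UNIV. w k * ((\<Sum>m<N. \<beta> m k * t ^ Suc m / fact (Suc m)) + \<rho> * t ^ Suc N / fact (Suc N)))) {0..t}"
    by (intro has_integral_sum has_integral_mult_right has_integral_add mono_integral_c t) auto
  fix s assume s: "s \<in> {0..t}"
  show "(\<Sum>k\<in>UNIV. w k * C k s) \<le> (\<Sum>k\<in>UNIV. w k * ((\<Sum>m<N. \<beta> m k * s ^ m / fact m) + \<rho> * s ^ N / fact N))"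
    using Cb[OF s] by (intro sum_mono mult_left_mono w) simp_all
qed

fun Pit :: "('j \<Rightarrow> 'j \<Rightarrow> real) \<Rightarrow> ('j \<Rightarrow> real) \<Rightarrow> nat \<Rightarrow> 'j \<Rightarrow> real" where
  "Pit K v 0 l = v l"
| "Pit K v (Suc m) l = (\<Sum>k\<in>UNIV. K l k * Pit K v m k)"

lemma picard:
  fixes C :: "'j::finite \<Rightarrow> real \<Rightarrow> real" and K :: "'j \<Rightarrow> 'j \<Rightarrow> real"
  assumes Kpos: "\<And>l k. 0 \<le> K l k"
    and Cc: "\<And>l. continuous_on {0..T} (C l)"
    and Cb: "\<And>l s. s \<in> {0..T} \<Longrightarrow> C l s \<le> M"
    and M: "0 \<le> M"
    and ineq: "\<And>l t. t \<in> {0..T} \<Longrightarrow> C l t \<le> C l 0 + integral {0..t} (\<lambda>s. \<Sum>k\<in>UNIV. K l k * C k s)"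
    and kappa: "\<And>l. (\<Sum>k\<in>UNIV. K l k) \<le> \<kappa>"
  shows "t \<in> {0..T} \<Longrightarrow> C l t \<le> (\<Sum>m<N. Pit K (\<lambda>k. C k 0) m l * t ^ m / fact m) + M * \<kappa> ^ N * t ^ N / fact N"
proof (induction N arbitrary: l t)
  case 0
  thus ?case using Cb by simp
next
  case (Suc N)
  let ?P = "Pit K (\<lambda>k. C k 0)"
  have t: "0 \<le> t" "t \<le> T" using Suc.prems by auto
  have kpos: "0 \<le> \<kappa>" using kappa[of l] sum_nonneg[of UNIV "K l"] Kpos by (meson order_trans)
  have "C l t \<le> C l 0 + integral {0..t} (\<lambda>s. \<Sum>k\<in>UNIV. K l k * C k s)" using ineq Suc.prems by blast
  also have "integral {0..t} (\<lambda>s. \<Sum>k\<in>UNIV. K l k * C k s)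
     \<le> (\<Sum>k\<in>UNIV. K l k * ((\<Sum>m<N. ?P m k * t ^ Suc m / fact (Suc m)) + (M * \<kappa> ^ N) * t ^ Suc N / fact (Suc N)))"
  proof (rule int_bound[OF t(1)])
    show "0 \<le> K l k" for k by (rule Kpos)
    show "continuous_on {0..t} (C k)" for k using Cc by (rule continuous_on_subset) (use t in auto)
    show "C k s \<le> (\<Sum>m<N. ?P m k * s ^ m / fact m) + M * \<kappa> ^ N * s ^ N / fact N" if "s \<in> {0..t}" for k s
      using Suc.IH[of s k] that t by auto
  qed
  also have "(\<Sum>k\<in>UNIV. K l k * ((\<Sum>m<N. ?P m k * t ^ Suc m / fact (Suc m)) + (M * \<kappa> ^ N) * t ^ Suc N / fact (Suc N)))
     = (\<Sum>m<N. ?P (Suc m) l * t ^ Suc m / fact (Suc m)) + (\<Sum>k\<in>UNIV. K l k) * (M * \<kappa> ^ N * t ^ Suc N / fact (Suc N))"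
    by (simp add: distrib_left sum.distrib sum_distrib_left sum_distrib_right sum_divide_distrib mult_ac
        sum.swap[where A=UNIV and B="{..<N}"])
  also have "(\<Sum>k\<in>UNIV. K l k) * (M * \<kappa> ^ N * t ^ Suc N / fact (Suc N)) \<le> \<kappa> * (M * \<kappa> ^ N * t ^ Suc N / fact (Suc N))"
    by (intro mult_right_mono kappa) (use M kpos t in simp)
  finally have "C l t \<le> C l 0 + (\<Sum>m<N. ?P (Suc m) l * t ^ Suc m / fact (Suc m)) + M * \<kappa> ^ Suc N * t ^ Suc N / fact (Suc N)"
    by (simp add: mult_ac)
  also have "C l 0 + (\<Sum>m<N. ?P (Suc m) l * t ^ Suc m / fact (Suc m)) = (\<Sum>m<Suc N. ?P m l * t ^ m / fact m)"
    by (simp only: sum.lessThan_Suc_shift) simp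
  finally show ?case .
qed

lemma mat_pow_entry_bound:
  fixes M :: "real^'j::finite^'j"
  defines "\<nu> \<equiv> (\<Sum>i\<in>UNIV. \<Sum>j\<in>UNIV. \<bar>M $ i $ j\<bar>)"
  shows "\<bar>mat_pow M k $ i $ j\<bar> \<le> \<nu> ^ k"
proof (induction k arbitrary: i j)
  case 0 thus ?case by (simp add: mat_def)
next
  case (Suc k)
  have row: "(\<Sum>l\<in>UNIV. \<bar>M $ i $ l\<bar>) \<le> \<nu>"
    unfolding \<nu>_def by (rule member_le_sum[where f="\<lambda>i. \<Sum>l\<in>UNIV. \<bar>M $ i $ l\<bar>"]) (auto intro: sum_nonneg)
  have "\<bar>mat_pow M (Suc k) $ i $ j\<bar> = \<bar>\<Sum>l\<in>UNIV. M $ i $ l * mat_pow M k $ l $ j\<bar>"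
    by (simp add: matrix_matrix_mult_def)
  also have "\<dots> \<le> (\<Sum>l\<in>UNIV. \<bar>M $ i $ l\<bar> * \<nu> ^ k)"
    by (rule order_trans[OF sum_abs]) (auto intro!: sum_mono mult_left_mono Suc.IH simp: abs_mult)
  also have "\<dots> \<le> \<nu> * \<nu> ^ k"
  proof -
    have "0 \<le> \<nu>" unfolding \<nu>_def by (intro sum_nonneg) simp
    thus ?thesis using row by (simp add: sum_distrib_right[symmetric] mult_right_mono)
  qed
  finally show ?case by simp
qed

lemma mexp_summable: "summable (\<lambda>k. (\<chi> i j. (mat_pow (M::real^'j::finite^'j) k $ i $ j) /\<^sub>R fact k))"
proof -
  define \<nu> where "\<nu> = (\<Sum>i\<in>UNIV. \<Sum>j\<in>UNIV. \<bar>M $ i $ j\<bar>)"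
  define n where "n = real CARD('j)"
  show ?thesis
  proof (rule summable_comparison_test')
    show "summable (\<lambda>k. (n * n) * (inverse (fact k) * \<nu> ^ k))"
      by (intro summable_mult summable_exp)
    fix k :: nat
    have "norm (\<chi> i j. (mat_pow M k $ i $ j) /\<^sub>R fact k) \<le> (\<Sum>i\<in>UNIV. norm ((\<chi> i j. (mat_pow M k $ i $ j) /\<^sub>R fact k) $ i))"
      unfolding norm_vec_def by (rule L2_set_le_sum) simp
    also have "\<dots> \<le> (\<Sum>i\<in>(UNIV::'j set). \<Sum>j\<in>(UNIV::'j set). inverse (fact k) * \<nu> ^ k)"
    proof (rule sum_mono)
      fix i
      have "norm ((\<chi> i j. (mat_pow M k $ i $ j) /\<^sub>R fact k) $ i) \<le> (\<Sum>j\<in>UNIV. norm ((\<chi> i j. (mat_pow M k $ i $ j) /\<^sub>R fact k) $ i $ j))"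
        unfolding norm_vec_def by (rule L2_set_le_sum) simp
      also have "\<dots> \<le> (\<Sum>j\<in>(UNIV::'j set). inverse (fact k) * \<nu> ^ k)"
        by (rule sum_mono) (simp add: mat_pow_entry_bound \<nu>_def abs_mult mult_left_mono)
      finally show "norm ((\<chi> i j. (mat_pow M k $ i $ j) /\<^sub>R fact k) $ i) \<le> (\<Sum>j\<in>(UNIV::'j set). inverse (fact k) * \<nu> ^ k)" .
    qed
    also have "\<dots> = (n * n) * (inverse (fact k) * \<nu> ^ k)" by (simp add: n_def)
    finally show "norm (\<chi> i j. (mat_pow M k $ i $ j) /\<^sub>R fact k) \<le> (n * n) * (inverse (fact k) * \<nu> ^ k)" .
  qed
qed

lemma mexp_entry:
  "mexp (M::real^'j::finite^'j) $ i $ j = (\<Sum>k. mat_pow M k $ i $ j / fact k)"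
  "summable (\<lambda>k. mat_pow M k $ i $ j / fact k)"
proof -
  have bl: "bounded_linear (\<lambda>x::real^'j^'j. x $ i $ j)"
    using bounded_linear_compose[OF bounded_linear_vec_nth[of j] bounded_linear_vec_nth[of i]] by simp
  show "mexp M $ i $ j = (\<Sum>k. mat_pow M k $ i $ j / fact k)"
    unfolding mexp_def using bounded_linear.suminf[OF bl mexp_summable[of M]]
    by (simp add: divide_inverse mult.commute)
  show "summable (\<lambda>k. mat_pow M k $ i $ j / fact k)"
    using bounded_linear.summable[OF bl mexp_summable[of M]] by (simp add: divide_inverse mult.commute)
qed

lemma mat_pow_scaleR: "mat_pow (s *\<^sub>R (M::real^'j::finite^'j)) k = s ^ k *\<^sub>R mat_pow M k"
  by (induction k) (simp_all add: vec_eq_iff matrix_matrix_mult_def sum_distrib_left mult_ac)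

lemma mat_pow_nonneg:
  assumes "\<And>i j. 0 \<le> (M::real^'j::finite^'j) $ i $ j"
  shows "0 \<le> mat_pow M k $ i $ j"
  using assms by (induction k arbitrary: i j) (auto simp: mat_def matrix_matrix_mult_def intro!: sum_nonneg)

lemma mexp_partial:
  assumes "\<And>i j. 0 \<le> (M::real^'j::finite^'j) $ i $ j" "0 \<le> s"
  shows "(\<Sum>m<N. mat_pow M m $ i $ j * s ^ m / fact m) \<le> mexp (s *\<^sub>R M) $ i $ j"
proof -
  have "(\<Sum>m<N. mat_pow M m $ i $ j * s ^ m / fact m) = (\<Sum>m<N. mat_pow (s *\<^sub>R M) m $ i $ j / fact m)"
    by (simp add: mat_pow_scaleR mult_ac)
  also have "\<dots> \<le> (\<Sum>m. mat_pow (s *\<^sub>R M) m $ i $ j / fact m)"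
    by (rule sum_le_suminf[OF mexp_entry(2)]) (simp_all add: mat_pow_scaleR mat_pow_nonneg assms)
  finally show ?thesis by (simp add: mexp_entry(1))
qed

lemma mat_pow_comm: "mat_pow M k ** M = M ** mat_pow (M::'a::semiring_1^'j::finite^'j) k"
proof (induction k)
  case (Suc k)
  have "mat_pow M (Suc k) ** M = M ** (mat_pow M k ** M)" by (simp add: matrix_mul_assoc)
  also have "\<dots> = M ** mat_pow M (Suc k)" using Suc.IH by simp
  finally show ?case .
qed simp

lemma mat_pow_sym:
  assumes "\<And>i j. (M::'a::comm_semiring_1^'j::finite^'j) $ i $ j = M $ j $ i"
  shows "mat_pow M k $ i $ j = mat_pow M k $ j $ i"
proof -
  have tM: "transpose M = M" using assms by (simp add: vec_eq_iff transpose_def)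
  have "transpose (mat_pow M k) = mat_pow M k"
  proof (induction k)
    case 0 thus ?case by (simp add: transpose_mat)
  next
    case (Suc k)
    have "transpose (mat_pow M (Suc k)) = transpose (mat_pow M k) ** transpose M"
      by (simp add: matrix_transpose_mul)
    also have "\<dots> = mat_pow M k ** M" using Suc.IH tM by simp
    also have "\<dots> = mat_pow M (Suc k)" by (simp add: mat_pow_comm)
    finally show ?case .
  qed
  moreover have "transpose (mat_pow M k) $ i $ j = mat_pow M k $ j $ i" by (simp add: transpose_def)
  ultimately show ?thesis by simp
qed

lemma mat_pow_walk:
  assumes "\<And>i k. M $ i $ k \<noteq> 0 \<Longrightarrow> E i k"
  shows "mat_pow (M::'a::semiring_1^'j::finite^'j) m $ i $ j \<noteq> 0 \<Longrightarrow> walk E m i j"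
proof (induction m arbitrary: i)
  case 0
  hence "i = j" by (simp add: mat_def split: if_splits)
  thus ?case by (simp add: walk0)
next
  case (Suc m)
  hence ne: "(\<Sum>k\<in>UNIV. M $ i $ k * mat_pow M m $ k $ j) \<noteq> 0" by (simp add: matrix_matrix_mult_def)
  have "\<exists>k. M $ i $ k * mat_pow M m $ k $ j \<noteq> 0"
  proof (rule ccontr)
    assume "\<not> ?thesis"
    hence "\<forall>k\<in>UNIV. M $ i $ k * mat_pow M m $ k $ j = 0" by simp
    hence "(\<Sum>k\<in>UNIV. M $ i $ k * mat_pow M m $ k $ j) = 0" by (rule sum.neutral)
    with ne show False by simp
  qed
  then obtain k where "M $ i $ k * mat_pow M m $ k $ j \<noteq> 0" by blast
  hence h1: "M $ i $ k \<noteq> 0" and h2: "mat_pow M m $ k $ j \<noteq> 0" by auto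
  show ?case by (rule walkS[OF assms[OF h1] Suc.IH[OF h2]])
qed

lemma walk_gdist:
  assumes "walk E m i j"
  shows "\<exists>d. gdist E i j = enat d \<and> d \<le> m"
proof -
  have ex: "\<exists>n. walk E n i j" using assms by blast
  have "(LEAST n. walk E n i j) \<le> m" by (rule Least_le) (rule assms)
  thus ?thesis using ex by (simp add: gdist_def)
qed

lemma gdist_zero:
  assumes "gdist E i j = enat 0" shows "i = j"
proof -
  have ex: "\<exists>n. walk E n i j"
  proof (rule ccontr)
    assume "\<not> ?thesis" with assms show False by (simp add: gdist_def)
  qed
  hence "enat (LEAST n. walk E n i j) = enat 0" using assms by (simp add: gdist_def)
  hence "(LEAST n. walk E n i j) = 0" by simp
  with LeastI_ex[OF ex] have "walk E 0 i j" by simp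
  thus "i = j" by (rule walk.cases) auto
qed

lemma ineqA: "1 \<le> D \<Longrightarrow> (real D + 1) ^ D \<le> exp 1 * real D ^ D"
proof -
  assume D: "1 \<le> D"
  have Dp: "real D > 0" using D by simp
  have "1 + 1 / real D \<le> exp (1 / real D)" by (rule exp_ge_add_one_self)
  hence "(1 + 1 / real D) ^ D \<le> exp (1 / real D) ^ D" by (rule power_mono) (use Dp in simp)
  also have "\<dots> = exp (real D * (1 / real D))" by (metis exp_of_nat_mult)
  also have "\<dots> = exp 1" using Dp by simp
  finally have a: "(1 + 1 / real D) ^ D \<le> exp 1" .
  have "(real D + 1) ^ D = real D ^ D * (1 + 1 / real D) ^ D"
    using Dp by (simp add: power_mult_distrib[symmetric] field_simps)
  also have "\<dots> \<le> real D ^ D * exp 1" using a Dp by (intro mult_left_mono) simp_all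
  finally show ?thesis by (simp add: mult.commute)
qed

lemma ineqB:
  assumes "1 \<le> D" "D \<le> d"
  shows "exp (real (d - D)) * real D ^ d \<le> real d ^ d"
proof -
  define y where "y = real (d - D) / real d"
  have dp: "real d > 0" using assms by simp
  have y01: "0 \<le> y" "y < 1" using assms dp by (auto simp: y_def field_simps)
  have "1 - y \<le> exp (- y)" using exp_ge_add_one_self[of "-y"] by simp
  hence "exp y * (1 - y) \<le> exp y * exp (- y)" by (intro mult_left_mono) simp_all
  also have "\<dots> = 1" by (simp add: exp_minus field_simps)
  finally have e1: "exp y * (1 - y) \<le> 1" .
  have "1 - y = real D / real d" using assms dp by (simp add: y_def field_simps of_nat_diff)
  with e1 have "exp y * real D \<le> real d" using dp by (simp add: field_simps)
  hence "(exp y * real D) ^ d \<le> real d ^ d" by (rule power_mono) simp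
  moreover have "(exp y * real D) ^ d = exp (real (d - D)) * real D ^ d"
    using dp by (simp add: power_mult_distrib exp_of_nat_mult[symmetric] y_def)
  ultimately show ?thesis by simp
qed

lemma real_ineq:
  fixes D d :: nat and x :: real
  assumes D: "1 \<le> D" "D \<le> d" and x: "0 \<le> x" "x \<le> real D"
  shows "x ^ (d + 1) / (real d ^ d * (real d + 1)) \<le> exp 1 * exp (real D - real d) * (x / (real D + 1)) ^ (D + 1)"
proof -
  define k where "k = d - D"
  have dk: "d = D + k" using D by (simp add: k_def)
  have Dp: "real D > 0" using D by simp
  have dp: "real d > 0" using D by simp
  have key: "real D ^ k * (exp (real k) * (real D + 1) ^ (D + 1)) \<le> exp 1 * (real d ^ d * (real d + 1))"
  proof -
    have "real D ^ k * (exp (real k) * (real D + 1) ^ (D + 1)) = real D ^ k * (real D + 1) ^ D * (real D + 1) * exp (real k)"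
      by (simp add: mult_ac)
    also have "\<dots> \<le> real D ^ k * (exp 1 * real D ^ D) * (real D + 1) * exp (real k)"
      using ineqA[OF D(1)] by (intro mult_right_mono mult_left_mono) simp_all
    also have "\<dots> = exp 1 * (real D + 1) * (exp (real k) * real D ^ d)"
      by (simp add: dk power_add mult_ac)
    also have "\<dots> \<le> exp 1 * (real D + 1) * real d ^ d"
      using ineqB[OF D] by (intro mult_left_mono) (simp_all add: k_def)
    also have "\<dots> \<le> exp 1 * (real d + 1) * real d ^ d"
      using D by (intro mult_right_mono mult_left_mono) simp_all
    finally show ?thesis by (simp add: mult_ac)
  qed
  have "x ^ (d + 1) = x ^ (D + 1) * x ^ k" by (simp add: dk power_add mult_ac)
  also have "\<dots> \<le> x ^ (D + 1) * real D ^ k" using x by (intro mult_left_mono power_mono) simp_all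
  finally have xk: "x ^ (d + 1) \<le> x ^ (D + 1) * real D ^ k" .
  have "x ^ (d + 1) / (real d ^ d * (real d + 1)) \<le> x ^ (D + 1) * real D ^ k / (real d ^ d * (real d + 1))"
    using xk dp by (intro divide_right_mono) simp_all
  also have "\<dots> \<le> x ^ (D + 1) * (exp 1 / (exp (real k) * (real D + 1) ^ (D + 1)))"
  proof -
    have Q: "0 < real d ^ d * (real d + 1)" using dp by simp
    have R: "0 < exp (real k) * (real D + 1) ^ (D + 1)" by simp
    have "real D ^ k \<le> exp 1 * (real d ^ d * (real d + 1)) / (exp (real k) * (real D + 1) ^ (D + 1))"
      using key by (simp only: pos_le_divide_eq[OF R])
    also have "\<dots> = exp 1 / (exp (real k) * (real D + 1) ^ (D + 1)) * (real d ^ d * (real d + 1))"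
      by (rule times_divide_eq_left[symmetric])
    finally have "real D ^ k / (real d ^ d * (real d + 1)) \<le> exp 1 / (exp (real k) * (real D + 1) ^ (D + 1))"
      by (simp only: pos_divide_le_eq[OF Q])
    hence "x ^ (D + 1) * (real D ^ k / (real d ^ d * (real d + 1))) \<le> x ^ (D + 1) * (exp 1 / (exp (real k) * (real D + 1) ^ (D + 1)))"
      using x by (intro mult_left_mono) simp_all
    thus ?thesis by (simp only: times_divide_eq_right)
  qed
  also have "\<dots> = exp 1 * exp (real D - real d) * (x / (real D + 1)) ^ (D + 1)"
  proof -
    have "exp (real D - real d) = inverse (exp (real k))" using dk by (simp add: exp_minus[symmetric])
    thus ?thesis by (simp add: power_divide divide_inverse mult_ac power_mult_distrib power_inverse)
  qed
  finally show ?thesis .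
qed

lemma pair_bound:
  fixes H :: "real^'j::finite^'j"
  assumes Hnn: "\<And>i j. 0 \<le> H $ i $ j" and u: "0 < u" and c: "0 < c"
    and G: "\<And>s. 0 \<le> s \<Longrightarrow> s \<le> real d / u \<Longrightarrow> mexp (s *\<^sub>R H) $ i $ j \<le> c * (u * s / real d) ^ d"
    and D: "1 \<le> D" "D \<le> d" and t: "0 \<le> t" "t \<le> real D / u"
  shows "(\<Sum>m<N. mat_pow H m $ i $ j * t ^ Suc m / fact (Suc m))
     \<le> c * exp 1 / u * exp (real D - real d) * (u * t / (real D + 1)) ^ (D + 1)"
proof -
  define \<alpha> where "\<alpha> = c * (u / real d) ^ d * fact d"
  have int1: "((\<lambda>s. \<Sum>m<N. mat_pow H m $ i $ j * s ^ m / fact m) has_integral (\<Sum>m<N. mat_pow H m $ i $ j * t ^ Suc m / fact (Suc m))) {0..t}"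
    by (intro has_integral_sum mono_integral_c t) auto
  have int2: "((\<lambda>s. \<alpha> * s ^ d / fact d) has_integral \<alpha> * t ^ Suc d / fact (Suc d)) {0..t}"
    by (rule mono_integral_c[OF t(1)])
  have "(\<Sum>m<N. mat_pow H m $ i $ j * t ^ Suc m / fact (Suc m)) \<le> \<alpha> * t ^ Suc d / fact (Suc d)"
  proof (rule has_integral_le[OF int1 int2])
    fix s assume s: "s \<in> {0..t}"
    have "real D / u \<le> real d / u" using D u by (simp add: divide_right_mono)
    hence sd: "s \<le> real d / u" using s t by auto
    have "(\<Sum>m<N. mat_pow H m $ i $ j * s ^ m / fact m) \<le> mexp (s *\<^sub>R H) $ i $ j"
      by (rule mexp_partial) (use Hnn s in auto)
    also have "\<dots> \<le> c * (u * s / real d) ^ d" by (rule G) (use s sd in auto)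
    also have "\<dots> = \<alpha> * s ^ d / fact d" by (simp add: \<alpha>_def power_mult_distrib power_divide)
    finally show "(\<Sum>m<N. mat_pow H m $ i $ j * s ^ m / fact m) \<le> \<alpha> * s ^ d / fact d" .
  qed
  also have "\<alpha> * t ^ Suc d / fact (Suc d) = c / u * ((u * t) ^ (d + 1) / (real d ^ d * (real d + 1)))"
  proof -
    have f: "(fact d :: real) / fact (Suc d) = 1 / (real d + 1)"
      by (simp add: fact_Suc divide_simps)
    have "\<alpha> * t ^ Suc d / fact (Suc d) = (c * (u / real d) ^ d) * ((fact d :: real) / fact (Suc d)) * t ^ Suc d"
      by (simp add: \<alpha>_def)
    also have "\<dots> = (c * (u / real d) ^ d) * (1 / (real d + 1)) * t ^ Suc d" by (simp only: f)
    also have "\<dots> = c / u * ((u * t) ^ (d + 1) / (real d ^ d * (real d + 1)))"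
      using u D by (simp add: power_mult_distrib power_divide field_simps)
    finally show ?thesis .
  qed
  also have "\<dots> \<le> c / u * (exp 1 * exp (real D - real d) * (u * t / (real D + 1)) ^ (D + 1))"
  proof (intro mult_left_mono real_ineq D)
    show "0 \<le> u * t" using u t by simp
    show "u * t \<le> real D" using u t by (simp add: field_simps)
    show "0 \<le> c / u" using u c by simp
  qed
  finally show ?thesis by (simp add: mult_ac)
qed

lemma pit_hmat:
  fixes K :: "'j::finite \<Rightarrow> 'j \<Rightarrow> real" and Hm :: "real^'j^'j"
  assumes K: "\<And>l k. K l k = (if E l k then 2 * \<bar>h k\<bar> else 0)"
    and H: "\<And>l k. Hm $ l $ k = (if E l k then 2 * sqrt (\<bar>h l\<bar> * \<bar>h k\<bar>) else 0)"
  shows "sqrt \<bar>h l\<bar> * Pit K v m l = (\<Sum>i\<in>UNIV. mat_pow Hm m $ l $ i * (sqrt \<bar>h i\<bar> * v i))"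
proof (induction m arbitrary: l)
  case 0
  show ?case by (simp add: mat_def sum_if_mult_l)
next
  case (Suc m)
  have kk: "sqrt \<bar>h l\<bar> * K l k = Hm $ l $ k * sqrt \<bar>h k\<bar>" for k
  proof -
    have "sqrt \<bar>h k\<bar> * sqrt \<bar>h k\<bar> = \<bar>h k\<bar>" by simp
    thus ?thesis by (simp add: K H real_sqrt_mult mult_ac)
  qed
  have "sqrt \<bar>h l\<bar> * Pit K v (Suc m) l = (\<Sum>k\<in>UNIV. Hm $ l $ k * (sqrt \<bar>h k\<bar> * Pit K v m k))"
    by (simp add: sum_distrib_left mult.assoc[symmetric] kk)
  also have "\<dots> = (\<Sum>k\<in>UNIV. Hm $ l $ k * (\<Sum>i\<in>UNIV. mat_pow Hm m $ k $ i * (sqrt \<bar>h i\<bar> * v i)))"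
    by (simp add: Suc.IH)
  also have "\<dots> = (\<Sum>k\<in>UNIV. \<Sum>i\<in>UNIV. Hm $ l $ k * mat_pow Hm m $ k $ i * (sqrt \<bar>h i\<bar> * v i))"
    by (simp add: sum_distrib_left mult.assoc)
  also have "\<dots> = (\<Sum>i\<in>UNIV. \<Sum>k\<in>UNIV. Hm $ l $ k * mat_pow Hm m $ k $ i * (sqrt \<bar>h i\<bar> * v i))"
    by (rule sum.swap)
  also have "\<dots> = (\<Sum>i\<in>UNIV. (\<Sum>k\<in>UNIV. Hm $ l $ k * mat_pow Hm m $ k $ i) * (sqrt \<bar>h i\<bar> * v i))"
    by (simp add: sum_distrib_right)
  also have "\<dots> = (\<Sum>i\<in>UNIV. mat_pow Hm (Suc m) $ l $ i * (sqrt \<bar>h i\<bar> * v i))"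
    by (simp add: matrix_matrix_mult_def)
  finally show ?case .
qed

lemma comm_bound:
  fixes g :: "'j::finite \<Rightarrow> 'n::finite cm"
  shows "norm ((Icm * (\<Sum>j\<in>UNIV. w j *\<^sub>R g j)) * y - y * (Icm * (\<Sum>j\<in>UNIV. w j *\<^sub>R g j)))
     \<le> (\<Sum>j\<in>UNIV. \<bar>w j\<bar> * norm (y * g j - g j * y))"
proof -
  let ?Z = "\<Sum>j\<in>UNIV. w j *\<^sub>R g j"
  have "(Icm * ?Z) * y - y * (Icm * ?Z) = Icm * (?Z * y - y * ?Z)"
  proof -
    have "y * (Icm * ?Z) = Icm * (y * ?Z)" by (metis mult.assoc Icm_comm)
    thus ?thesis by (simp add: right_diff_distrib mult.assoc)
  qed
  also have "?Z * y - y * ?Z = (\<Sum>j\<in>UNIV. w j *\<^sub>R (g j * y - y * g j))"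
    by (simp add: sum_distrib_left sum_distrib_right sum_subtractf[symmetric] scaleR_diff_right)
  finally have eq: "(Icm * ?Z) * y - y * (Icm * ?Z) = Icm * (\<Sum>j\<in>UNIV. w j *\<^sub>R (g j * y - y * g j))" .
  have "norm (Icm * (\<Sum>j\<in>UNIV. w j *\<^sub>R (g j * y - y * g j))) \<le> norm (Icm :: 'n cm) * norm (\<Sum>j\<in>UNIV. w j *\<^sub>R (g j * y - y * g j))"
    by (rule norm_mult_ineq)
  also have "\<dots> \<le> 1 * norm (\<Sum>j\<in>UNIV. w j *\<^sub>R (g j * y - y * g j))"
    by (intro mult_right_mono norm_Icm) simp
  also have "\<dots> \<le> (\<Sum>j\<in>UNIV. norm (w j *\<^sub>R (g j * y - y * g j)))" by (simp only: mult_1_left norm_sum)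
  also have "\<dots> = (\<Sum>j\<in>UNIV. \<bar>w j\<bar> * norm (y * g j - g j * y))"
    by (simp add: norm_minus_commute)
  finally show ?thesis using eq by simp
qed

lemma comm2_bound:
  fixes z x :: "'a::real_normed_algebra"
  shows "norm (z * x - x * z) \<le> 2 * norm x * norm z"
proof -
  have "norm (z * x - x * z) \<le> norm (z * x) + norm (x * z)" by (rule norm_triangle_ineq4)
  also have "\<dots> \<le> norm z * norm x + norm x * norm z" by (intro add_mono norm_mult_ineq)
  finally show ?thesis by (simp add: mult_ac)
qed

lemma herm_sum:
  assumes "\<And>j. adj (g j) = g j"
  shows "adj (\<Sum>j\<in>S. w j *\<^sub>R (g j :: 'n::finite cm)) = (\<Sum>j\<in>S. w j *\<^sub>R g j)"
  by (simp add: real_vector.linear_sum[OF bounded_linear.linear[OF bl_adj]] adj_scaleR assms)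

lemma core:
  fixes g :: "'j::finite \<Rightarrow> 'n::finite cm" and h :: "'j \<Rightarrow> real" and a0 b :: "'n cm"
    and E :: "'j \<Rightarrow> 'j \<Rightarrow> bool" and P :: "'j \<Rightarrow> bool"
  assumes herm: "\<And>j. adj (g j) = g j" and norm1: "\<And>j. norm (g j) = 1"
    and Ecomm: "\<And>i j. \<not> E i j \<Longrightarrow> g i * g j = g j * g i"
    and Yb: "\<And>j. \<not> P j \<Longrightarrow> g j * b = b * g j"
    and t: "0 \<le> t"
    and Kf_def: "Kf = Icm * (\<Sum>j\<in>UNIV. h j *\<^sub>R g j)"
    and a_def: "a = (\<lambda>s. exp (s *\<^sub>R Kf) * a0 * exp (s *\<^sub>R (- Kf)))"
    and Km_def: "Km = (\<lambda>l k. if E l k then 2 * \<bar>h k\<bar> else 0)"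
    and C_def: "C = (\<lambda>l s. norm (a s * g l - g l * a s))"
    and wB_def: "wB = (\<lambda>k. if P k then 2 * norm b * \<bar>h k\<bar> else 0)"
    and \<kappa>_def: "\<kappa> = (\<Sum>l\<in>UNIV. \<Sum>k\<in>UNIV. Km l k)"
  shows "norm (a t * b - b * a t) \<le> norm (a0 * b - b * a0) +
     (\<Sum>k\<in>UNIV. wB k * ((\<Sum>m<N. Pit Km (\<lambda>k. C k 0) m k * t ^ Suc m / fact (Suc m))
         + (2 * norm a0 * \<kappa> ^ N) * t ^ Suc N / fact (Suc N)))"
proof -
  define M where "M = 2 * norm a0"
  have U: "norm (exp (s *\<^sub>R (Icm * (\<Sum>j\<in>UNIV. w j *\<^sub>R g j)))) \<le> 1" for w s
    by (rule exp_iherm_norm) (rule herm_sum[OF herm])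
  have Uf1: "norm (exp (s *\<^sub>R Kf)) \<le> 1" for s unfolding Kf_def by (rule U)
  have Uf2: "norm (exp (s *\<^sub>R (- Kf))) \<le> 1" for s
    using Uf1[of "-s"] by simp
  have a0eq: "a 0 = a0" by (simp add: a_def)
  have anorm: "norm (a s) \<le> norm a0" for s
    unfolding a_def by (rule norm_sandwich[OF Uf1 Uf2])
  have ader: "(a has_vector_derivative (Kf * a s - a s * Kf)) (at s)" for s
    unfolding a_def by (rule deriv_sandwich)
  have acont: "continuous_on S a" for S
  proof (rule continuous_at_imp_continuous_on, intro ballI)
    fix x show "isCont a x" using has_vector_derivative_continuous[OF ader[of x]] .
  qed
  have Ccont: "continuous_on S (C l)" for S l
    unfolding C_def by (intro continuous_intros acont)
  have Cb: "C l s \<le> M" for l s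
  proof -
    have "C l s \<le> 2 * norm (g l) * norm (a s)" unfolding C_def by (rule comm2_bound)
    also have "\<dots> \<le> M" using anorm[of s] by (simp add: norm1 M_def)
    finally show ?thesis .
  qed
  have Cnn: "0 \<le> C l s" for l s by (simp add: C_def)
  have split: "Kf = Icm * (\<Sum>j\<in>UNIV. (if Q j then h j else 0) *\<^sub>R g j) + Icm * (\<Sum>j\<in>UNIV. (if Q j then 0 else h j) *\<^sub>R g j)" for Q
  proof -
    have "(\<Sum>j\<in>UNIV. (if Q j then h j else 0) *\<^sub>R g j) + (\<Sum>j\<in>UNIV. (if Q j then 0 else h j) *\<^sub>R g j)
        = (\<Sum>j\<in>UNIV. (if Q j then h j else 0) *\<^sub>R g j + (if Q j then 0 else h j) *\<^sub>R g j)"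
      by (simp only: sum.distrib)
    also have "\<dots> = (\<Sum>j\<in>UNIV. h j *\<^sub>R g j)" by (rule sum.cong) auto
    finally show ?thesis unfolding Kf_def by (simp add: distrib_left[symmetric])
  qed
  have comm_c: "(Icm * (\<Sum>j\<in>UNIV. (if Q j then h j else 0) *\<^sub>R g j)) * x = x * (Icm * (\<Sum>j\<in>UNIV. (if Q j then h j else 0) *\<^sub>R g j))"
    if Qx: "\<And>j. Q j \<Longrightarrow> g j * x = x * g j" for Q x
  proof -
    let ?Z = "\<Sum>j\<in>UNIV. (if Q j then h j else 0) *\<^sub>R g j"
    have "?Z * x = (\<Sum>j\<in>UNIV. (if Q j then h j else 0) *\<^sub>R (g j * x))" by (simp add: sum_distrib_right)
    also have "\<dots> = (\<Sum>j\<in>UNIV. (if Q j then h j else 0) *\<^sub>R (x * g j))" by (rule sum.cong) (auto simp: Qx)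
    also have "\<dots> = x * ?Z" by (simp add: sum_distrib_left)
    finally have Zx: "?Z * x = x * ?Z" .
    have "(Icm * ?Z) * x = Icm * (x * ?Z)" by (simp only: mult.assoc Zx)
    also have "\<dots> = x * (Icm * ?Z)" by (simp only: mult.assoc[symmetric] Icm_comm[of x])
    finally show ?thesis .
  qed
  have duh: "norm (a \<tau> * x - x * a \<tau>) \<le> norm (a0 * x - x * a0) +
      integral {0..\<tau>} (\<lambda>s. 2 * norm x * (\<Sum>j\<in>UNIV. \<bar>if Q j then 0 else h j\<bar> * C j s))"
    if Qx: "\<And>j. Q j \<Longrightarrow> g j * x = x * g j" and tau: "0 \<le> \<tau>" for Q x \<tau>
  proof (rule duhamel[where Kc = "Icm * (\<Sum>j\<in>UNIV. (if Q j then h j else 0) *\<^sub>R g j)"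
        and Kn = "Icm * (\<Sum>j\<in>UNIV. (if Q j then 0 else h j) *\<^sub>R g j)" and a = a])
    show "Icm * (\<Sum>j\<in>UNIV. (if Q j then h j else 0) *\<^sub>R g j) * x = x * (Icm * (\<Sum>j\<in>UNIV. (if Q j then h j else 0) *\<^sub>R g j))"
      by (rule comm_c[OF Qx])
    show "norm (exp (s *\<^sub>R (Icm * (\<Sum>j\<in>UNIV. (if Q j then h j else 0) *\<^sub>R g j)))) \<le> 1" for s by (rule U)
    show "0 \<le> \<tau>" by (rule tau)
    show "continuous_on {0..\<tau>} (\<lambda>s. 2 * norm x * (\<Sum>j\<in>UNIV. \<bar>if Q j then 0 else h j\<bar> * C j s))"
      by (intro continuous_intros Ccont)
    show "a s = exp (s *\<^sub>R (Icm * (\<Sum>j\<in>UNIV. (if Q j then h j else 0) *\<^sub>R g j) + Icm * (\<Sum>j\<in>UNIV. (if Q j then 0 else h j) *\<^sub>R g j))) * a0 *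
        exp (s *\<^sub>R - (Icm * (\<Sum>j\<in>UNIV. (if Q j then h j else 0) *\<^sub>R g j) + Icm * (\<Sum>j\<in>UNIV. (if Q j then 0 else h j) *\<^sub>R g j)))" for s
      unfolding split[of Q, symmetric] a_def by simp
    fix s
    let ?Kn = "Icm * (\<Sum>j\<in>UNIV. (if Q j then 0 else h j) *\<^sub>R g j)"
    have "norm ((?Kn * a s - a s * ?Kn) * x - x * (?Kn * a s - a s * ?Kn)) \<le> 2 * norm x * norm (?Kn * a s - a s * ?Kn)"
      by (rule comm2_bound)
    also have "\<dots> \<le> 2 * norm x * (\<Sum>j\<in>UNIV. \<bar>if Q j then 0 else h j\<bar> * C j s)"
      unfolding C_def by (intro mult_left_mono comm_bound) simp
    finally show "norm ((?Kn * a s - a s * ?Kn) * x - x * (?Kn * a s - a s * ?Kn)) \<le> 2 * norm x * (\<Sum>j\<in>UNIV. \<bar>if Q j then 0 else h j\<bar> * C j s)" .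
  qed
  have Cineq: "C l \<tau> \<le> C l 0 + integral {0..\<tau>} (\<lambda>s. \<Sum>k\<in>UNIV. Km l k * C k s)" if "\<tau> \<in> {0..t}" for l \<tau>
  proof -
    have "norm (a \<tau> * g l - g l * a \<tau>) \<le> norm (a0 * g l - g l * a0) +
      integral {0..\<tau>} (\<lambda>s. 2 * norm (g l) * (\<Sum>j\<in>UNIV. \<bar>if \<not> E l j then 0 else h j\<bar> * C j s))"
      by (rule duh) (use that Ecomm in auto)
    moreover have "(\<lambda>s. 2 * norm (g l) * (\<Sum>j\<in>UNIV. \<bar>if \<not> E l j then 0 else h j\<bar> * C j s)) = (\<lambda>s. \<Sum>k\<in>UNIV. Km l k * C k s)"
    proof (rule ext)
      fix s
      show "2 * norm (g l) * (\<Sum>j\<in>UNIV. \<bar>if \<not> E l j then 0 else h j\<bar> * C j s) = (\<Sum>k\<in>UNIV. Km l k * C k s)"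
        unfolding norm1 Km_def sum_distrib_left by (rule sum.cong) auto
    qed
    ultimately have "norm (a \<tau> * g l - g l * a \<tau>) \<le> norm (a0 * g l - g l * a0) +
      integral {0..\<tau>} (\<lambda>s. \<Sum>k\<in>UNIV. Km l k * C k s)" by (simp only:)
    thus ?thesis by (simp only: C_def a0eq)
  qed
  have kappa: "(\<Sum>k\<in>UNIV. Km l k) \<le> \<kappa>" for l
    unfolding \<kappa>_def by (rule member_le_sum[where f="\<lambda>l. \<Sum>k\<in>UNIV. Km l k"]) (auto simp: Km_def intro: sum_nonneg)
  have pic: "C l s \<le> (\<Sum>m<N. Pit Km (\<lambda>k. C k 0) m l * s ^ m / fact m) + M * \<kappa> ^ N * s ^ N / fact N"
    if "s \<in> {0..t}" for l s N
    by (rule picard[of Km t C M]) (use that Ccont Cb Cineq kappa in \<open>auto simp: Km_def M_def\<close>)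
  have Bineq: "norm (a t * b - b * a t) \<le> norm (a0 * b - b * a0) + integral {0..t} (\<lambda>s. \<Sum>k\<in>UNIV. wB k * C k s)"
  proof -
    have "norm (a t * b - b * a t) \<le> norm (a0 * b - b * a0) +
      integral {0..t} (\<lambda>s. 2 * norm b * (\<Sum>j\<in>UNIV. \<bar>if \<not> P j then 0 else h j\<bar> * C j s))"
      by (rule duh) (use t Yb in auto)
    moreover have "(\<lambda>s. 2 * norm b * (\<Sum>j\<in>UNIV. \<bar>if \<not> P j then 0 else h j\<bar> * C j s)) = (\<lambda>s. \<Sum>k\<in>UNIV. wB k * C k s)"
    proof (rule ext)
      fix s
      show "2 * norm b * (\<Sum>j\<in>UNIV. \<bar>if \<not> P j then 0 else h j\<bar> * C j s) = (\<Sum>k\<in>UNIV. wB k * C k s)"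
        unfolding wB_def sum_distrib_left by (rule sum.cong) auto
    qed
    ultimately show ?thesis by (simp only:)
  qed
  have "integral {0..t} (\<lambda>s. \<Sum>k\<in>UNIV. wB k * C k s) \<le>
     (\<Sum>k\<in>UNIV. wB k * ((\<Sum>m<N. Pit Km (\<lambda>k. C k 0) m k * t ^ Suc m / fact (Suc m)) + (M * \<kappa> ^ N) * t ^ Suc N / fact (Suc N)))"
    by (rule int_bound[OF t]) (use pic Ccont in \<open>auto simp: wB_def\<close>)
  with Bineq show ?thesis by (simp add: M_def)
qed

lemma sum_if_in: "(\<Sum>k\<in>(UNIV::'j::finite set). if k \<in> Y then f k else 0) = (\<Sum>k\<in>Y. (f k :: real))"
proof -
  have "(\<Sum>k\<in>Y. f k) = (\<Sum>k\<in>UNIV \<inter> Y. f k)" by simp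
  also have "\<dots> = (\<Sum>k\<in>UNIV. if k \<in> Y then f k else 0)" by (rule sum.inter_restrict) simp
  finally show ?thesis by simp
qed

lemma hk_bound:
  fixes Hm :: "real^'j::finite^'j" and Km :: "'j \<Rightarrow> 'j \<Rightarrow> real"
  assumes K: "\<And>l k. Km l k = (if E l k then 2 * \<bar>h k\<bar> else 0)"
    and H: "\<And>l k. Hm $ l $ k = (if E l k then 2 * sqrt (\<bar>h l\<bar> * \<bar>h k\<bar>) else 0)"
    and Hsym: "\<And>i j. Hm $ i $ j = Hm $ j $ i"
    and v0: "\<And>i. i \<notin> X \<Longrightarrow> v i = 0" and vb: "\<And>i. 0 \<le> v i" "\<And>i. v i \<le> V"
  shows "\<bar>h k\<bar> * Pit Km v m k \<le> V * (\<Sum>i\<in>X. sqrt \<bar>h i * h k\<bar> * mat_pow Hm m $ i $ k)"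
proof -
  have Hnn: "0 \<le> Hm $ i $ j" for i j by (simp add: H)
  have Pnn: "0 \<le> mat_pow Hm m $ i $ j" for i j by (rule mat_pow_nonneg[OF Hnn])
  have Psym: "mat_pow Hm m $ k $ i = mat_pow Hm m $ i $ k" for i by (rule mat_pow_sym[OF Hsym])
  have "\<bar>h k\<bar> * Pit Km v m k = sqrt \<bar>h k\<bar> * (sqrt \<bar>h k\<bar> * Pit Km v m k)"
    by (simp add: mult.assoc[symmetric])
  also have "\<dots> = sqrt \<bar>h k\<bar> * (\<Sum>i\<in>UNIV. mat_pow Hm m $ k $ i * (sqrt \<bar>h i\<bar> * v i))"
    by (simp add: pit_hmat[OF K H])
  also have "\<dots> \<le> sqrt \<bar>h k\<bar> * (\<Sum>i\<in>UNIV. if i \<in> X then mat_pow Hm m $ k $ i * (sqrt \<bar>h i\<bar> * V) else 0)"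
  proof (intro mult_left_mono sum_mono)
    fix i
    show "mat_pow Hm m $ k $ i * (sqrt \<bar>h i\<bar> * v i) \<le> (if i \<in> X then mat_pow Hm m $ k $ i * (sqrt \<bar>h i\<bar> * V) else 0)"
      using v0[of i] vb[of i] Pnn[of k i] by (auto intro!: mult_left_mono)
  qed simp
  also have "\<dots> = sqrt \<bar>h k\<bar> * (\<Sum>i\<in>X. mat_pow Hm m $ k $ i * (sqrt \<bar>h i\<bar> * V))"
    by (simp only: sum_if_in)
  also have "\<dots> = V * (\<Sum>i\<in>X. sqrt \<bar>h i * h k\<bar> * mat_pow Hm m $ i $ k)"
    by (simp add: sum_distrib_left Psym real_sqrt_mult abs_mult mult_ac)
  finally show ?thesis .
qed

lemma sum_est:
  fixes Hm :: "real^'j::finite^'j" and Km :: "'j \<Rightarrow> 'j \<Rightarrow> real"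
  assumes K: "\<And>l k. Km l k = (if E l k then 2 * \<bar>h k\<bar> else 0)"
    and H: "\<And>l k. Hm $ l $ k = (if E l k then 2 * sqrt (\<bar>h l\<bar> * \<bar>h k\<bar>) else 0)"
    and Hsym: "\<And>i j. Hm $ i $ j = Hm $ j $ i"
    and v0: "\<And>i. i \<notin> X \<Longrightarrow> v i = 0" and vb: "\<And>i. 0 \<le> v i" "\<And>i. v i \<le> V"
    and tau: "\<And>m. 0 \<le> \<tau> m" and nb: "0 \<le> nb"
  shows "(\<Sum>k\<in>UNIV. (if k \<in> Y then 2 * nb * \<bar>h k\<bar> else 0) * (\<Sum>m<N. Pit Km v m k * \<tau> m))
    \<le> 2 * nb * V * (\<Sum>k\<in>Y. \<Sum>i\<in>X. sqrt \<bar>h i * h k\<bar> * (\<Sum>m<N. mat_pow Hm m $ i $ k * \<tau> m))"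
proof -
  have "(\<Sum>k\<in>UNIV. (if k \<in> Y then 2 * nb * \<bar>h k\<bar> else 0) * (\<Sum>m<N. Pit Km v m k * \<tau> m))
      = (\<Sum>k\<in>Y. 2 * nb * (\<Sum>m<N. (\<bar>h k\<bar> * Pit Km v m k) * \<tau> m))"
  proof -
    have "(\<Sum>k\<in>UNIV. (if k \<in> Y then 2 * nb * \<bar>h k\<bar> else 0) * (\<Sum>m<N. Pit Km v m k * \<tau> m))
        = (\<Sum>k\<in>UNIV. if k \<in> Y then 2 * nb * \<bar>h k\<bar> * (\<Sum>m<N. Pit Km v m k * \<tau> m) else 0)"
      by (rule sum.cong) auto
    also have "\<dots> = (\<Sum>k\<in>Y. 2 * nb * \<bar>h k\<bar> * (\<Sum>m<N. Pit Km v m k * \<tau> m))"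
      by (rule sum_if_in)
    also have "\<dots> = (\<Sum>k\<in>Y. 2 * nb * (\<Sum>m<N. (\<bar>h k\<bar> * Pit Km v m k) * \<tau> m))"
      by (rule sum.cong) (simp_all add: sum_distrib_left mult_ac)
    finally show ?thesis .
  qed
  also have "\<dots> \<le> (\<Sum>k\<in>Y. 2 * nb * (\<Sum>m<N. (V * (\<Sum>i\<in>X. sqrt \<bar>h i * h k\<bar> * mat_pow Hm m $ i $ k)) * \<tau> m))"
    by (intro sum_mono mult_left_mono mult_right_mono hk_bound[OF K H Hsym v0 vb] tau) (simp_all add: nb)
  also have "\<dots> = 2 * nb * V * (\<Sum>k\<in>Y. \<Sum>i\<in>X. sqrt \<bar>h i * h k\<bar> * (\<Sum>m<N. mat_pow Hm m $ i $ k * \<tau> m))"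
  proof -
    have "(\<Sum>m<N. (V * (\<Sum>i\<in>X. sqrt \<bar>h i * h k\<bar> * mat_pow Hm m $ i $ k)) * \<tau> m)
        = V * (\<Sum>i\<in>X. sqrt \<bar>h i * h k\<bar> * (\<Sum>m<N. mat_pow Hm m $ i $ k * \<tau> m))" for k
    proof -
      have "(\<Sum>m<N. (V * (\<Sum>i\<in>X. sqrt \<bar>h i * h k\<bar> * mat_pow Hm m $ i $ k)) * \<tau> m)
          = V * (\<Sum>m<N. \<Sum>i\<in>X. sqrt \<bar>h i * h k\<bar> * (mat_pow Hm m $ i $ k * \<tau> m))"
        by (simp add: sum_distrib_left sum_distrib_right mult_ac)
      also have "\<dots> = V * (\<Sum>i\<in>X. \<Sum>m<N. sqrt \<bar>h i * h k\<bar> * (mat_pow Hm m $ i $ k * \<tau> m))"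
        by (simp only: sum.swap[of _ "{..<N}" X])
      also have "\<dots> = V * (\<Sum>i\<in>X. sqrt \<bar>h i * h k\<bar> * (\<Sum>m<N. mat_pow Hm m $ i $ k * \<tau> m))"
        by (simp only: sum_distrib_left)
      finally show ?thesis .
    qed
    thus ?thesis by (simp add: sum_distrib_left mult_ac)
  qed
  finally show ?thesis .
qed

lemma CM_sum: "CM (\<Sum>j\<in>S. f j) = (\<Sum>j\<in>S. CM (f j))"
  by (rule real_vector.linear_sum[OF bounded_linear.linear[OF bl_CM]])
lemma CM_scaleR: "CM (r *\<^sub>R M) = r *\<^sub>R CM M"
  by (rule mt_inject[THEN iffD1]) (simp add: mt_scaleR CM_inverse)
lemma CM_uminus: "CM (- M) = - CM M"
  by (rule mt_inject[THEN iffD1]) (simp add: uminus_cm.rep_eq CM_inverse)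
lemma mscale_real: "mscale (complex_of_real r) M = r *\<^sub>R M"
  apply (simp add: mscale_def vec_eq_iff)
  apply (simp add: scaleR_conv_of_real)
  done
lemma mat_scale: "mat (c * complex_of_real t) = t *\<^sub>R mat c"
  apply (simp add: vec_eq_iff mat_def)
  apply (simp add: scaleR_conv_of_real mult.commute)
  done
lemma mat_uminus: "mat (- c) = - mat (c::'a::ring_1)"
  by (simp add: vec_eq_iff mat_def)

lemma heis_CM: "CM (heis H t A) = exp (t *\<^sub>R (Icm * CM H)) * CM A * exp (t *\<^sub>R (- (Icm * CM H)))"
proof -
  have e1: "CM (mscale (\<i> * complex_of_real t) H) = t *\<^sub>R (Icm * CM H)"
    by (simp add: mscale_eq CM_times mat_scale CM_scaleR Icm_def)
  have e2: "CM (mscale (- (\<i> * complex_of_real t)) H) = t *\<^sub>R (- (Icm * CM H))"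
  proof -
    have "- (\<i> * complex_of_real t) = (- \<i>) * complex_of_real t" by simp
    hence "CM (mscale (- (\<i> * complex_of_real t)) H) = CM (mscale ((- \<i>) * complex_of_real t) H)" by (simp only:)
    also have "\<dots> = t *\<^sub>R (- (Icm * CM H))"
      by (simp only: mscale_eq CM_times mat_scale CM_scaleR Icm_def mat_uminus CM_uminus) simp
    finally show ?thesis .
  qed
  show ?thesis by (simp add: heis_def CM_times CM_mexp e1 e2)
qed


theorem mainTheorem4:
  fixes \<gamma> :: "'j::finite \<Rightarrow> complex^'n::finite^'n"
    and h :: "'j \<Rightarrow> real"
    and u c :: real
    and A B :: "complex^'n^'n"
    and D :: nat
  assumes herm: "\<And>j. hermitian (\<gamma> j)"
    and norm1: "\<And>j. opnorm (\<gamma> j) = 1"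
    and u_pos: "u > 0" and c_pos: "c > 0"
    and Gbound: "\<And>i j n t. gdist (cedge \<gamma>) i j = enat n \<Longrightarrow> 1 \<le> n \<Longrightarrow> 0 \<le> t \<Longrightarrow>
        t \<le> real n / u \<Longrightarrow>
        mexp (t *\<^sub>R Hmat \<gamma> h) $ i $ j \<le> c * (u * t / real n) ^ n"
    and disj: "supp \<gamma> A \<inter> supp \<gamma> B = {}"
    and X_ne: "supp \<gamma> A \<noteq> {}" and Y_ne: "supp \<gamma> B \<noteq> {}"
    and dXY: "Min {gdist (cedge \<gamma>) i j | i j. i \<in> supp \<gamma> A \<and> j \<in> supp \<gamma> B} = enat D"
  shows "\<forall>t. 0 \<le> t \<and> t \<le> real D / u \<longrightarrow>
    opnorm (commutator (heis (\<Sum>j\<in>UNIV. mscale (complex_of_real (h j)) (\<gamma> j)) t A) B)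
      - opnorm (commutator A B)
    \<le> 4 * c * exp 1 / u * opnorm A * opnorm B *
       (\<Sum>(i, j)\<in>{(i, j). i \<in> supp \<gamma> A \<and> j \<in> supp \<gamma> B \<and> gdist (cedge \<gamma>) i j \<noteq> \<infinity>}.
          sqrt \<bar>h i * h j\<bar> * exp (real D - real (the_enat (gdist (cedge \<gamma>) i j))))
       * (u * t / (real D + 1)) ^ (D + 1)"
proof (intro allI impI)
  fix t :: real
  assume tt: "0 \<le> t \<and> t \<le> real D / u"
  hence t0: "0 \<le> t" and tD: "t \<le> real D / u" by auto
  define X where "X = supp \<gamma> A"
  define Y where "Y = supp \<gamma> B"
  define g where "g = (\<lambda>j. CM (\<gamma> j))"
  define Hs where "Hs = (\<Sum>j\<in>UNIV. mscale (complex_of_real (h j)) (\<gamma> j))"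
  define Kf where "Kf = Icm * (\<Sum>j\<in>UNIV. h j *\<^sub>R g j)"
  define a where "a = (\<lambda>s. exp (s *\<^sub>R Kf) * CM A * exp (s *\<^sub>R (- Kf)))"
  define Km where "Km = (\<lambda>l k. if cedge \<gamma> l k then 2 * \<bar>h k\<bar> else 0)"
  define C where "C = (\<lambda>l s. norm (a s * g l - g l * a s))"
  define na where "na = norm (CM A)"
  define nb where "nb = norm (CM B)"
  define wB where "wB = (\<lambda>k. if k \<in> Y then 2 * nb * \<bar>h k\<bar> else 0)"
  define \<kappa> where "\<kappa> = (\<Sum>l\<in>UNIV. \<Sum>k\<in>UNIV. Km l k)"
  define Hm where "Hm = Hmat \<gamma> h"
  define dd where "dd = (\<lambda>i j. gdist (cedge \<gamma>) i j)"
  define Q where "Q = (u * t / (real D + 1)) ^ (D + 1)"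
  define Bd where "Bd = (\<lambda>i k. if dd i k = \<infinity> then 0 else c * exp 1 / u * exp (real D - real (the_enat (dd i k))) * Q)"
  define pb where "pb = (\<lambda>N i k. \<Sum>m<N. mat_pow Hm m $ i $ k * (t ^ Suc m / fact (Suc m)))"
  have CHs: "CM Hs = (\<Sum>j\<in>UNIV. h j *\<^sub>R g j)"
    by (simp add: Hs_def CM_sum mscale_real CM_scaleR g_def)
  have heis_eq: "CM (heis Hs t A) = a t"
    by (simp add: heis_CM CHs a_def Kf_def)
  have LHS_eq: "opnorm (commutator (heis Hs t A) B) - opnorm (commutator A B)
      = norm (a t * CM B - CM B * a t) - norm (CM A * CM B - CM B * CM A)"
    by (simp add: opnorm_norm commutator_CM heis_eq)
  have herm': "adj (g j) = g j" for j
    using herm[of j] by (simp add: g_def adj.abs_eq hermitian_def)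
  have norm1': "norm (g j) = 1" for j
    using norm1[of j] by (simp add: g_def opnorm_norm)
  have comm_of: "CM M * CM N = CM N * CM M" if "commutator M N = 0" for M N :: "complex^'n^'n"
  proof -
    have "M ** N = N ** M" using that by (simp add: commutator_def)
    thus ?thesis by (simp add: CM_times[symmetric])
  qed
  have Ecomm: "g i * g j = g j * g i" if "\<not> cedge \<gamma> i j" for i j
  proof (cases "i = j")
    case False
    hence "commutator (\<gamma> i) (\<gamma> j) = 0" using that by (simp add: cedge_def)
    thus ?thesis unfolding g_def by (rule comm_of)
  qed simp
  have Yb: "g j * CM B = CM B * g j" if "\<not> j \<in> Y" for j
    using that comm_of[of "\<gamma> j" B] by (simp add: Y_def supp_def g_def)
  have Xa: "g j * CM A = CM A * g j" if "j \<notin> X" for j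
    using that comm_of[of "\<gamma> j" A] by (simp add: X_def supp_def g_def)
  have core_inst: "norm (a t * CM B - CM B * a t) \<le> norm (CM A * CM B - CM B * CM A) +
     (\<Sum>k\<in>UNIV. wB k * ((\<Sum>m<N. Pit Km (\<lambda>k. C k 0) m k * t ^ Suc m / fact (Suc m))
         + (2 * na * \<kappa> ^ N) * t ^ Suc N / fact (Suc N)))" for N
  proof -
    have wB_eq: "wB = (\<lambda>k. if k \<in> Y then 2 * norm (CM B) * \<bar>h k\<bar> else 0)"
      unfolding wB_def nb_def by (rule refl)
    show ?thesis unfolding na_def
      by (rule core[where E = "cedge \<gamma>" and P = "\<lambda>k. k \<in> Y", OF herm' norm1' Ecomm Yb t0 Kf_def a_def Km_def C_def wB_eq \<kappa>_def])
  qed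
  have a0: "a 0 = CM A" by (simp add: a_def)
  define v where "v = (\<lambda>k. C k 0)"
  have v0: "v i = 0" if "i \<notin> X" for i
    using Xa[OF that] by (simp add: v_def C_def a0)
  have vb1: "0 \<le> v i" for i by (simp add: v_def C_def)
  have vb2: "v i \<le> 2 * na" for i
  proof -
    have "v i = norm (CM A * g i - g i * CM A)" by (simp add: v_def C_def a0)
    also have "\<dots> \<le> 2 * norm (g i) * norm (CM A)" by (rule comm2_bound)
    finally show ?thesis by (simp add: norm1' na_def)
  qed
  have Hent: "Hm $ l $ k = (if cedge \<gamma> l k then 2 * sqrt (\<bar>h l\<bar> * \<bar>h k\<bar>) else 0)" for l k
    by (simp add: Hm_def Hmat_def)
  have Esym: "cedge \<gamma> i j = cedge \<gamma> j i" for i j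
  proof -
    have "commutator (\<gamma> i) (\<gamma> j) = - commutator (\<gamma> j) (\<gamma> i)" by (simp add: commutator_def)
    thus ?thesis by (auto simp: cedge_def)
  qed
  have Hsym: "Hm $ i $ j = Hm $ j $ i" for i j by (simp add: Hent Esym mult.commute)
  have Hnn: "0 \<le> Hm $ i $ j" for i j by (simp add: Hent)
  have Km_eq: "Km l k = (if cedge \<gamma> l k then 2 * \<bar>h k\<bar> else 0)" for l k by (simp add: Km_def)
  have nb0: "0 \<le> nb" by (simp add: nb_def)
  have na0: "0 \<le> na" by (simp add: na_def)
  have est: "(\<Sum>k\<in>UNIV. wB k * (\<Sum>m<N. Pit Km v m k * (t ^ Suc m / fact (Suc m))))
      \<le> 2 * nb * (2 * na) * (\<Sum>k\<in>Y. \<Sum>i\<in>X. sqrt \<bar>h i * h k\<bar> * pb N i k)" for N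
    unfolding wB_def pb_def
    by (rule sum_est[OF Km_eq Hent Hsym v0 vb1 vb2]) (simp_all add: t0 nb0)
  define W where "W = (\<Sum>k\<in>UNIV. wB k)"
  have split_sum: "(\<Sum>k\<in>UNIV. wB k * ((\<Sum>m<N. Pit Km (\<lambda>k. C k 0) m k * t ^ Suc m / fact (Suc m))
         + (2 * na * \<kappa> ^ N) * t ^ Suc N / fact (Suc N)))
     = (\<Sum>k\<in>UNIV. wB k * (\<Sum>m<N. Pit Km v m k * (t ^ Suc m / fact (Suc m)))) + W * ((2 * na * \<kappa> ^ N) * t ^ Suc N / fact (Suc N))" for N
    by (simp add: v_def W_def distrib_left sum.distrib sum_distrib_right sum_divide_distrib)
  define Dset where "Dset = {gdist (cedge \<gamma>) i j | i j. i \<in> supp \<gamma> A \<and> j \<in> supp \<gamma> B}"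
  have finD: "finite Dset"
  proof -
    have "Dset \<subseteq> (\<lambda>(i, j). gdist (cedge \<gamma>) i j) ` UNIV" by (auto simp: Dset_def)
    thus ?thesis by (rule finite_subset) simp
  qed
  have Dle: "enat D \<le> dd i k" if "i \<in> X" "k \<in> Y" for i k
  proof -
    have "dd i k \<in> Dset" using that by (auto simp: Dset_def dd_def X_def Y_def)
    thus ?thesis using Min_le[OF finD] dXY by (simp add: Dset_def)
  qed
  have D1: "1 \<le> D"
  proof -
    have "Dset \<noteq> {}" using X_ne Y_ne by (auto simp: Dset_def)
    hence "Min Dset \<in> Dset" using finD by (rule Min_in[rotated])
    then obtain i0 j0 where ij: "i0 \<in> supp \<gamma> A" "j0 \<in> supp \<gamma> B" "gdist (cedge \<gamma>) i0 j0 = enat D"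
      using dXY by (auto simp: Dset_def)
    show ?thesis
    proof (rule ccontr)
      assume "\<not> 1 \<le> D"
      hence "D = 0" by simp
      hence "i0 = j0" using ij(3) gdist_zero by auto
      thus False using ij(1,2) disj by auto
    qed
  qed
  have pbB: "pb N i k \<le> Bd i k" if ik: "i \<in> X" "k \<in> Y" for N i k
  proof (cases "dd i k = \<infinity>")
    case True
    have "mat_pow Hm m $ i $ k = 0" for m
    proof (rule ccontr)
      assume "mat_pow Hm m $ i $ k \<noteq> 0"
      hence "walk (cedge \<gamma>) m i k" by (rule mat_pow_walk[rotated]) (simp add: Hent split: if_splits)
      from walk_gdist[OF this] True show False by (auto simp: dd_def)
    qed
    thus ?thesis using True by (simp add: pb_def Bd_def)
  next
    case False
    then obtain d where d: "dd i k = enat d" by auto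
    have Dd: "D \<le> d" using Dle[OF ik] d by simp
    have "pb N i k = (\<Sum>m<N. mat_pow Hm m $ i $ k * t ^ Suc m / fact (Suc m))" by (simp add: pb_def)
    also have "\<dots> \<le> c * exp 1 / u * exp (real D - real d) * (u * t / (real D + 1)) ^ (D + 1)"
    proof (rule pair_bound[OF Hnn u_pos c_pos _ D1 Dd t0 tD])
      fix s :: real assume "0 \<le> s" "s \<le> real d / u"
      thus "mexp (s *\<^sub>R Hm) $ i $ k \<le> c * (u * s / real d) ^ d"
        unfolding Hm_def by (intro Gbound) (use d dd_def D1 Dd in auto)
    qed
    also have "\<dots> = Bd i k" using d by (simp add: Bd_def Q_def)
    finally show ?thesis .
  qed
  define PS where "PS = {(i, j). i \<in> supp \<gamma> A \<and> j \<in> supp \<gamma> B \<and> gdist (cedge \<gamma>) i j \<noteq> \<infinity>}"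
  define SS where "SS = (\<Sum>(i, j)\<in>PS. sqrt \<bar>h i * h j\<bar> * exp (real D - real (the_enat (gdist (cedge \<gamma>) i j))))"
  have sumEq: "(\<Sum>k\<in>Y. \<Sum>i\<in>X. sqrt \<bar>h i * h k\<bar> * Bd i k) = c * exp 1 / u * SS * Q"
  proof -
    define F where "F = (\<lambda>p. sqrt \<bar>h (fst p) * h (snd p)\<bar> * Bd (fst p) (snd p))"
    have "(\<Sum>k\<in>Y. \<Sum>i\<in>X. sqrt \<bar>h i * h k\<bar> * Bd i k) = (\<Sum>i\<in>X. \<Sum>k\<in>Y. sqrt \<bar>h i * h k\<bar> * Bd i k)"
      by (rule sum.swap)
    also have "\<dots> = (\<Sum>p\<in>X \<times> Y. F p)"
      by (simp add: F_def sum.cartesian_product case_prod_beta)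
    also have "\<dots> = (\<Sum>p\<in>PS. c * exp 1 / u * Q * (case p of (i, j) \<Rightarrow> sqrt \<bar>h i * h j\<bar> * exp (real D - real (the_enat (gdist (cedge \<gamma>) i j)))))"
    proof (rule sum.mono_neutral_cong_right)
      show "finite (X \<times> Y)" by simp
      show "PS \<subseteq> X \<times> Y" by (auto simp: PS_def X_def Y_def)
      show "\<forall>p\<in>X \<times> Y - PS. F p = 0" by (auto simp: PS_def X_def Y_def F_def Bd_def dd_def)
      show "F p = c * exp 1 / u * Q * (case p of (i, j) \<Rightarrow> sqrt \<bar>h i * h j\<bar> * exp (real D - real (the_enat (gdist (cedge \<gamma>) i j))))"
        if "p \<in> PS" for p
        using that by (auto simp: PS_def F_def Bd_def dd_def mult_ac)
    qed
    also have "\<dots> = c * exp 1 / u * Q * SS" by (simp add: SS_def sum_distrib_left)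
    finally show ?thesis by (simp add: mult_ac)
  qed
  define T where "T = 4 * na * nb * (c * exp 1 / u * SS * Q)"
  have boundN: "norm (a t * CM B - CM B * a t) - norm (CM A * CM B - CM B * CM A) \<le> T + W * (2 * na * t * ((\<kappa> * t) ^ N / fact N))" for N
  proof -
    have kap0: "0 \<le> \<kappa>" by (simp add: \<kappa>_def Km_def sum_nonneg)
    have W0: "0 \<le> W" by (simp add: W_def wB_def nb0 sum_nonneg)
    have "(\<Sum>k\<in>Y. \<Sum>i\<in>X. sqrt \<bar>h i * h k\<bar> * pb N i k) \<le> (\<Sum>k\<in>Y. \<Sum>i\<in>X. sqrt \<bar>h i * h k\<bar> * Bd i k)"
      by (intro sum_mono mult_left_mono pbB) (auto simp: X_def Y_def)
    hence s1: "(\<Sum>k\<in>Y. \<Sum>i\<in>X. sqrt \<bar>h i * h k\<bar> * pb N i k) \<le> c * exp 1 / u * SS * Q"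
      using sumEq by simp
    have e1': "2 * nb * (2 * na) * (\<Sum>k\<in>Y. \<Sum>i\<in>X. sqrt \<bar>h i * h k\<bar> * pb N i k) \<le> 2 * nb * (2 * na) * (c * exp 1 / u * SS * Q)"
      using s1 na0 nb0 by (intro mult_left_mono) simp_all
    have "2 * nb * (2 * na) = 4 * na * nb" by simp
    hence e1: "2 * nb * (2 * na) * (\<Sum>k\<in>Y. \<Sum>i\<in>X. sqrt \<bar>h i * h k\<bar> * pb N i k) \<le> T"
      using e1' unfolding T_def by (simp add: mult_ac)
    have e2: "(2 * na * \<kappa> ^ N) * t ^ Suc N / fact (Suc N) \<le> 2 * na * t * ((\<kappa> * t) ^ N / fact N)"
    proof -
      have "(2 * na * \<kappa> ^ N) * t ^ Suc N / fact (Suc N) = (2 * na * t * (\<kappa> * t) ^ N) / fact (Suc N)"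
        by (simp add: power_mult_distrib mult_ac)
      also have "\<dots> \<le> (2 * na * t * (\<kappa> * t) ^ N) / fact N"
        by (rule divide_left_mono) (use na0 t0 kap0 fact_mono[of N "Suc N"] in auto)
      finally show ?thesis by simp
    qed
    have "norm (a t * CM B - CM B * a t) - norm (CM A * CM B - CM B * CM A)
       \<le> (\<Sum>k\<in>UNIV. wB k * (\<Sum>m<N. Pit Km v m k * (t ^ Suc m / fact (Suc m)))) + W * ((2 * na * \<kappa> ^ N) * t ^ Suc N / fact (Suc N))"
      using core_inst[of N] split_sum[of N] by simp
    also have "\<dots> \<le> T + W * (2 * na * t * ((\<kappa> * t) ^ N / fact N))"
      using est[of N] e1 e2 W0 by (intro add_mono mult_left_mono) auto
    finally show ?thesis .
  qed
  have lim: "(\<lambda>N. T + W * (2 * na * t * ((\<kappa> * t) ^ N / fact N))) \<longlonglongrightarrow> T"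
  proof -
    have "(\<lambda>N. (\<kappa> * t) ^ N /\<^sub>R fact N) \<longlonglongrightarrow> 0"
      by (rule summable_LIMSEQ_zero[OF summable_exp_generic])
    hence "(\<lambda>N. (\<kappa> * t) ^ N / fact N) \<longlonglongrightarrow> 0" by (simp add: divide_inverse mult.commute)
    hence "(\<lambda>N. T + W * (2 * na * t * ((\<kappa> * t) ^ N / fact N))) \<longlonglongrightarrow> T + W * (2 * na * t * 0)"
      by (intro tendsto_intros)
    thus ?thesis by simp
  qed
  have "norm (a t * CM B - CM B * a t) - norm (CM A * CM B - CM B * CM A) \<le> T"
    by (rule LIMSEQ_le_const[OF lim]) (use boundN in auto)
  moreover have "T = 4 * c * exp 1 / u * opnorm A * opnorm B * SS * (u * t / (real D + 1)) ^ (D + 1)"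
    by (simp add: T_def Q_def na_def nb_def opnorm_norm mult_ac)
  ultimately show "opnorm (commutator (heis (\<Sum>j\<in>UNIV. mscale (complex_of_real (h j)) (\<gamma> j)) t A) B)
      - opnorm (commutator A B)
    \<le> 4 * c * exp 1 / u * opnorm A * opnorm B *
       (\<Sum>(i, j)\<in>{(i, j). i \<in> supp \<gamma> A \<and> j \<in> supp \<gamma> B \<and> gdist (cedge \<gamma>) i j \<noteq> \<infinity>}.
          sqrt \<bar>h i * h j\<bar> * exp (real D - real (the_enat (gdist (cedge \<gamma>) i j))))
       * (u * t / (real D + 1)) ^ (D + 1)"
    using LHS_eq by (simp add: Hs_def SS_def PS_def)
qed

end
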